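(* Let $\bm{\mu}\in X^{\mathcal{L}(\mathcal{T})}$ satisfy (i) $V_{s_0}(\bm{\mu})\neq\theta$ and (ii) the maximizer $\bm{w}\in\Delta$ of $\inf_{\bm{\lambda}\in\mathrm{Alt}(\bm{\mu})}\sum_\ell w_\ell d(\mu_\ell,\lambda_\ell)$ is unique. Then for every $\epsilon>0$ there exists $\xi>0$ such that for all $\bm{\mu}'\in X^{\mathcal{L}(\mathcal{T})}$ with $\mu'_\ell\in[\mu_\ell-\xi,\mu_\ell+\xi]$ for every $\ell\in\mathcal{L}(\mathcal{T})$, \[\max_{\ell\in\mathcal{L}(\mathcal{T})}|w^{s_0}_\ell(\bm{\mu}')-w^{s_0}_\ell(\bm{\mu})|<\epsilon.\]
   Context: $\mathcal{T}$: finite rooted tree, node set $S$, root $s_0$, children $\mathcal{C}(s)$, leaves $\mathcal{L}(\mathcal{T})$, $\mathcal{D}(s)$ leaves descending from $s$; internal labels $L(s)\in\{\text{MAX},\text{MIN}\}$. $X\subseteq\mathbb{R}$ mean-parameter set of a one-parameter exponential family, $d(x,y)$ KL divergence between members with means $x,y$, threshold $\theta\in X$. $V_s(\bm{\lambda})=\lambda_s$ at leaves, max/min of children's values at MAX/MIN nodes; $a_s=$'win' iff $V_s\ge\theta$. $\Delta$ simplex over leaves; $\mathrm{Alt}(\bm{\mu})=\{\bm{\lambda}\in X^{\mathcal{L}(\mathcal{T})}:a_{s_0}(\bm{\lambda})\neq a_{s_0}(\bm{\mu})\}$. For any mean vector $\bm{\nu}$ (applied to both $\bm{\mu}$ and $\bm{\mu}'$),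 recursive weights: $a^*=a_{s_0}(\bm{\nu})$; $P=$MAX, $Q=$MIN if $a^*=$'win', swapped if 'lose'. Leaf $s$: $w^s_s=1$, $d_s=d(\nu_s,\theta)$ if ($a^*=$'win', $\nu_s\ge\theta$) or ($a^*=$'lose', $\nu_s<\theta$), else $0$. $L(s)=P$: $d_s=\max_c d_c$, $c^*(s)\in\arg\max_c d_c$, if $d_s>0$: $w^s=w^{c^*(s)}$ on $\mathcal{D}(c^*(s))$, $0$ elsewhere. $L(s)=Q$, all $d_c>0$: $d_s=(\sum_c1/d_c)^{-1}$, $w^s_\ell=\frac{w^c_\ell/d_c}{\sum_{c'}1/d_{c'}}$ on $\mathcal{D}(c)$. $L(s)=Q$ otherwise: $d_s=0$. Internal $s$ with $d_s=0$: $\bm{w}^s$ arbitrary probability vector on $\mathcal{D}(s)$. (These recursive values solve $\max_{\bm{w}}\inf_{\bm{\lambda}\in\mathrm{Alt}}\sum_\ell w_\ell d(\nu_\ell,\lambda_\ell)$.) *)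

theory Defs
  imports "HOL-Probability.Probability"
begin

definition log_partition :: "real measure \<Rightarrow> real \<Rightarrow> real" where
  "log_partition N \<eta> = ln (\<integral>t. exp (\<eta> * t) \<partial>N)"

definition ef_dens :: "real measure \<Rightarrow> real \<Rightarrow> real \<Rightarrow> real" where
  "ef_dens N \<eta> t = exp (\<eta> * t - log_partition N \<eta>)"

definition expfam :: "real measure \<Rightarrow> real set \<Rightarrow> bool" where
  "expfam N \<Theta> \<longleftrightarrow> sets N = sets borel \<and> sigma_finite_measure N \<and>
     open \<Theta> \<and> is_interval \<Theta> \<and> \<Theta> \<noteq> {} \<and>
     (\<forall>\<eta>\<in>\<Theta>. integrable N (\<lambda>t. exp (\<eta> * t))) \<and>
     \<not> (\<exists>c. AE t in N. t = c)"

definition ef_mean :: "real measure \<Rightarrow> real \<Rightarrow> real" where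
  "ef_mean N \<eta> = (\<integral>t. t * ef_dens N \<eta> t \<partial>N)"

definition mean_set :: "real measure \<Rightarrow> real set \<Rightarrow> real set" where
  "mean_set N \<Theta> = ef_mean N ` \<Theta>"

definition nat_param :: "real measure \<Rightarrow> real set \<Rightarrow> real \<Rightarrow> real" where
  "nat_param N \<Theta> x = (THE \<eta>. \<eta> \<in> \<Theta> \<and> ef_mean N \<eta> = x)"

definition KL :: "real measure \<Rightarrow> real set \<Rightarrow> real \<Rightarrow> real \<Rightarrow> real" where
  "KL N \<Theta> x y = (\<integral>t. ef_dens N (nat_param N \<Theta> x) t *
      ln (ef_dens N (nat_param N \<Theta> x) t / ef_dens N (nat_param N \<Theta> y) t) \<partial>N)"

datatype node_label = MAXnode | MINnode

datatype 'l gtree = Leaf 'l | Node node_label "'l gtree list"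

fun leaves :: "'l gtree \<Rightarrow> 'l set" where
  "leaves (Leaf l) = {l}"
| "leaves (Node k cs) = \<Union> (set (map leaves cs))"

fun leaf_list :: "'l gtree \<Rightarrow> 'l list" where
  "leaf_list (Leaf l) = [l]"
| "leaf_list (Node k cs) = concat (map leaf_list cs)"

fun subtrees :: "'l gtree \<Rightarrow> 'l gtree set" where
  "subtrees (Leaf l) = {Leaf l}"
| "subtrees (Node k cs) = insert (Node k cs) (\<Union> (set (map subtrees cs)))"

fun wf_tree :: "'l gtree \<Rightarrow> bool" where
  "wf_tree (Leaf l) = True"
| "wf_tree (Node k cs) = (cs \<noteq> [] \<and> (\<forall>c\<in>set cs. wf_tree c))"

definition game_tree :: "'l gtree \<Rightarrow> bool" where
  "game_tree T \<longleftrightarrow> wf_tree T \<and> distinct (leaf_list T)"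

fun val :: "('l \<Rightarrow> real) \<Rightarrow> 'l gtree \<Rightarrow> real" where
  "val lam (Leaf l) = lam l"
| "val lam (Node MAXnode cs) = Max (set (map (val lam) cs))"
| "val lam (Node MINnode cs) = Min (set (map (val lam) cs))"

definition wins :: "real \<Rightarrow> ('l \<Rightarrow> real) \<Rightarrow> 'l gtree \<Rightarrow> bool" where
  "wins \<theta> lam T \<longleftrightarrow> \<theta> \<le> val lam T"

text \<open>Recursive values d_s; parameter win = a*; a node has label P iff (label = MAX) = win.\<close>
fun dval :: "(real \<Rightarrow> real \<Rightarrow> real) \<Rightarrow> real \<Rightarrow> bool \<Rightarrow> ('l \<Rightarrow> real) \<Rightarrow> 'l gtree \<Rightarrow> real" where
  "dval dv \<theta> win \<nu> (Leaf l) =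
     (if (win \<and> \<theta> \<le> \<nu> l) \<or> (\<not> win \<and> \<nu> l < \<theta>) then dv (\<nu> l) \<theta> else 0)"
| "dval dv \<theta> win \<nu> (Node k cs) =
     (if (k = MAXnode) = win then Max (set (map (dval dv \<theta> win \<nu>) cs))
      else if (\<forall>c\<in>set cs. 0 < dval dv \<theta> win \<nu> c)
        then inverse (\<Sum>c\<in>set cs. 1 / dval dv \<theta> win \<nu> c)
      else 0)"

text \<open>w s is the weight vector w^s, a function on leaf names that vanishes outside D(s).
  The predicate expresses that w is an admissible result of the recursive construction
  (all admissible choices of argmax children and of arbitrary vectors where d_s = 0).\<close>
definition valid_weights ::
  "(real \<Rightarrow> real \<Rightarrow> real) \<Rightarrow> real \<Rightarrow> ('l \<Rightarrow> real) \<Rightarrow> 'l gtree \<Rightarrow> ('l gtree \<Rightarrow> 'l \<Rightarrow> real) \<Rightarrow> bool"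
where
  "valid_weights dv \<theta> \<nu> T w \<longleftrightarrow>
    (\<forall>s\<in>subtrees T.
      (case s of
        Leaf l \<Rightarrow> w s = (\<lambda>m. if m = l then 1 else 0)
      | Node k cs \<Rightarrow>
          (((k = MAXnode) = wins \<theta> \<nu> T \<and> 0 < dval dv \<theta> (wins \<theta> \<nu> T) \<nu> s) \<longrightarrow>
             (\<exists>c\<in>set cs. dval dv \<theta> (wins \<theta> \<nu> T) \<nu> c = dval dv \<theta> (wins \<theta> \<nu> T) \<nu> s \<and>
                 w s = (\<lambda>m. if m \<in> leaves c then w c m else 0)))
        \<and> (((k = MAXnode) \<noteq> wins \<theta> \<nu> T \<and> (\<forall>c\<in>set cs. 0 < dval dv \<theta> (wins \<theta> \<nu> T) \<nu> c)) \<longrightarrow>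
             w s = (\<lambda>m. \<Sum>c\<in>set cs. if m \<in> leaves c then
                  (w c m / dval dv \<theta> (wins \<theta> \<nu> T) \<nu> c) /
                  (\<Sum>c'\<in>set cs. 1 / dval dv \<theta> (wins \<theta> \<nu> T) \<nu> c') else 0))
        \<and> (dval dv \<theta> (wins \<theta> \<nu> T) \<nu> s = 0 \<longrightarrow>
             (\<forall>m. 0 \<le> w s m) \<and> (\<forall>m. m \<notin> leaves s \<longrightarrow> w s m = 0) \<and>
             (\<Sum>m\<in>leaves s. w s m) = 1)))"

definition leaf_simplex :: "'l set \<Rightarrow> ('l \<Rightarrow> real) set" where
  "leaf_simplex L = {w. (\<forall>l\<in>L. 0 \<le> w l) \<and> (\<forall>l. l \<notin> L \<longrightarrow> w l = 0) \<and> sum w L = 1}"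

definition Alt :: "real set \<Rightarrow> real \<Rightarrow> 'l gtree \<Rightarrow> ('l \<Rightarrow> real) \<Rightarrow> ('l \<Rightarrow> real) set" where
  "Alt X \<theta> T \<mu> = {lam. (\<forall>l\<in>leaves T. lam l \<in> X) \<and> wins \<theta> lam T \<noteq> wins \<theta> \<mu> T}"

definition objective ::
  "(real \<Rightarrow> real \<Rightarrow> real) \<Rightarrow> real set \<Rightarrow> real \<Rightarrow> 'l gtree \<Rightarrow> ('l \<Rightarrow> real) \<Rightarrow> ('l \<Rightarrow> real) \<Rightarrow> real"
where
  "objective dv X \<theta> T \<mu> w = (INF lam\<in>Alt X \<theta> T \<mu>. \<Sum>l\<in>leaves T. w l * dv (\<mu> l) (lam l))"

end

theory Submission
  imports Defs
begin


lemma exp_strict: "x \<noteq> 0 \<Longrightarrow> 1 + x < exp (x::real)"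
proof -
  assume x: "x \<noteq> 0"
  show ?thesis
  proof (cases "1 + x/2 \<ge> 0")
    case True
    have "(1 + x/2)^2 \<le> exp (x/2) ^ 2"
      using True exp_ge_add_one_self[of "x/2"] by (intro power_mono) auto
    also have "exp (x/2) ^ 2 = exp x" by (simp add: power2_eq_square flip: exp_add)
    finally have "(1+x/2)^2 \<le> exp x" .
    moreover have "0 < x*x" using x not_real_square_gt_zero by blast
    then have "1 + x < (1+x/2)^2" by (simp add: power2_eq_square algebra_simps)
    ultimately show ?thesis by simp
  next
    case False
    then have "1 + x < 0" by simp
    then show ?thesis using exp_gt_zero[of x] by linarith
  qed
qed

lemma abs_exp_bound:
  fixes t h e :: real assumes h: "0 < h"
  shows "\<bar>t\<bar> * exp (e * t) \<le> (exp ((e+h)*t) + exp ((e-h)*t)) / h"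
proof -
  have "h * \<bar>t\<bar> \<le> exp (h*\<bar>t\<bar>)" using exp_ge_add_one_self[of "h*\<bar>t\<bar>"] by linarith
  also have "exp (h*\<bar>t\<bar>) \<le> exp (h*t) + exp (-(h*t))"
    by (cases "t \<ge> 0") auto
  finally have "h*\<bar>t\<bar> * exp (e*t) \<le> (exp (h*t) + exp (-(h*t))) * exp (e*t)"
    by (intro mult_right_mono) auto
  also have "\<dots> = exp ((e+h)*t) + exp ((e-h)*t)"
    by (simp add: algebra_simps flip: exp_add)
  finally show ?thesis using h by (simp add: field_simps)
qed

locale EF =
  fixes N :: "real measure" and \<Theta> :: "real set"
  assumes ef: "expfam N \<Theta>"
begin

lemma sets_N[measurable_cong]: "sets N = sets borel"
  using ef by (simp add: expfam_def)

lemma open_Theta: "open \<Theta>" and int_Theta: "is_interval \<Theta>"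
  and int_exp: "\<eta> \<in> \<Theta> \<Longrightarrow> integrable N (\<lambda>t. exp (\<eta> * t))"
  and nondeg: "\<not> (AE t in N. t = c)"
  using ef by (auto simp: expfam_def)

definition Z where "Z \<eta> = (\<integral>t. exp (\<eta> * t) \<partial>N)"
definition Z1 where "Z1 \<eta> = (\<integral>t. t * exp (\<eta> * t) \<partial>N)"
abbreviation A where "A \<equiv> log_partition N"
abbreviation m where "m \<equiv> ef_mean N"

lemma A_def: "A \<eta> = ln (Z \<eta>)" by (simp add: log_partition_def Z_def)

lemma int_t_exp:
  assumes "\<eta> \<in> \<Theta>" shows "integrable N (\<lambda>t. t * exp (\<eta> * t))"
proof -
  obtain h where h: "h > 0" "ball \<eta> h \<subseteq> \<Theta>" using open_Theta assms open_contains_ball by blast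
  define h' where "h' = h/2"
  have h': "h' > 0" "\<eta> + h' \<in> \<Theta>" "\<eta> - h' \<in> \<Theta>" using h by (auto simp: h'_def dist_real_def)
  show ?thesis
  proof (rule Bochner_Integration.integrable_bound)
    show "integrable N (\<lambda>t. (exp ((\<eta>+h')*t) + exp ((\<eta>-h')*t)) / h')"
      using h' by (intro integrable_divide Bochner_Integration.integrable_add int_exp)
    show "(\<lambda>t. t * exp (\<eta> * t)) \<in> borel_measurable N" by measurable
    show "AE t in N. norm (t * exp (\<eta> * t)) \<le> norm ((exp ((\<eta>+h')*t) + exp ((\<eta>-h')*t)) / h')"
      using abs_exp_bound[OF h'(1)] h'(1) by (auto simp: abs_mult)
  qed
qed

lemma not_zero: "emeasure N (space N) \<noteq> 0"
proof
  assume "emeasure N (space N) = 0"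
  then have "AE t in N. t = 0" by (intro AE_I'[of "space N"]) auto
  with nondeg show False by blast
qed

lemma Z_pos: assumes "\<eta> \<in> \<Theta>" shows "0 < Z \<eta>"
proof -
  have "0 \<le> Z \<eta>" unfolding Z_def by (intro integral_nonneg_AE) auto
  moreover have "Z \<eta> \<noteq> 0"
  proof
    assume "Z \<eta> = 0"
    then have "AE t in N. exp (\<eta>*t) = 0"
      using integral_nonneg_eq_0_iff_AE[OF int_exp[OF assms]] by (simp add: Z_def)
    then have "AE t in N. t = 0" by (auto elim: AE_mp)
    with nondeg show False by blast
  qed
  ultimately show ?thesis by simp
qed

lemma dens_eq: assumes "\<eta> \<in> \<Theta>" shows "ef_dens N \<eta> t = exp (\<eta> * t) / Z \<eta>"
  using Z_pos[OF assms] by (simp add: ef_dens_def A_def exp_diff)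

lemma dens_pos: "0 < ef_dens N \<eta> t" by (simp add: ef_dens_def)

lemma m_eq: assumes "\<eta> \<in> \<Theta>" shows "m \<eta> = Z1 \<eta> / Z \<eta>"
  unfolding ef_mean_def dens_eq[OF assms] Z1_def by (simp add: times_divide_eq_right)

lemma int_dens: assumes "\<eta> \<in> \<Theta>" shows "integrable N (ef_dens N \<eta>)"
proof -
  have "ef_dens N \<eta> = (\<lambda>t. exp (\<eta>*t) / Z \<eta>)" using dens_eq[OF assms] by auto
  then show ?thesis using int_exp[OF assms] by simp
qed

lemma int_t_dens: "\<eta> \<in> \<Theta> \<Longrightarrow> integrable N (\<lambda>t. t * ef_dens N \<eta> t)"
  by (simp add: dens_eq int_t_exp times_divide_eq_right)

lemma integral_dens: assumes "\<eta> \<in> \<Theta>" shows "(\<integral>t. ef_dens N \<eta> t \<partial>N) = 1"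
proof -
  have "(\<integral>t. ef_dens N \<eta> t \<partial>N) = (\<integral>t. exp (\<eta>*t) / Z \<eta> \<partial>N)" using dens_eq[OF assms] by auto
  also have "\<dots> = Z \<eta> / Z \<eta>" by (simp add: Z_def)
  finally show ?thesis using Z_pos[OF assms] by simp
qed

lemma dens_ne: "ef_dens N \<eta> t \<noteq> 0" using dens_pos[of \<eta> t] by linarith

lemma gibbs:
  assumes e1: "\<eta>1 \<in> \<Theta>" and e2: "\<eta>2 \<in> \<Theta>" and ne: "\<eta>1 \<noteq> \<eta>2"
  shows "(\<eta>2 - \<eta>1) * m \<eta>1 < A \<eta>2 - A \<eta>1"
proof -
  define d where "d = \<eta>2 - \<eta>1"
  define c where "c = m \<eta>1"
  have d: "d \<noteq> 0" using ne by (simp add: d_def)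
  define g where "g t = exp (\<eta>2*t) - exp (d*c) * (exp (\<eta>1*t) + d * (t * exp (\<eta>1*t) - c * exp (\<eta>1*t)))" for t
  have g_eq: "g t = exp (\<eta>1*t) * (exp (d*t) - exp (d*c) * (1 + d*(t - c)))" for t
    by (simp add: g_def d_def algebra_simps flip: exp_add)
  have pw: "exp (d*c) * (1 + d*(t - c)) \<le> exp (d*t)" for t
  proof -
    have "exp (d*c) * (1 + d*(t-c)) \<le> exp (d*c) * exp (d*(t-c))"
      using exp_ge_add_one_self[of "d*(t-c)"] by (intro mult_left_mono) auto
    also have "\<dots> = exp (d*t)" by (simp add: algebra_simps flip: exp_add)
    finally show ?thesis .
  qed
  have pws: "exp (d*c) * (1 + d*(t - c)) < exp (d*t)" if "t \<noteq> c" for t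
  proof -
    have "exp (d*c) * (1 + d*(t-c)) < exp (d*c) * exp (d*(t-c))"
      using exp_strict[of "d*(t-c)"] that d by (intro mult_strict_left_mono) auto
    also have "\<dots> = exp (d*t)" by (simp add: algebra_simps flip: exp_add)
    finally show ?thesis .
  qed
  have gnn: "0 \<le> g t" for t unfolding g_eq using pw[of t] by simp
  have i1: "integrable N (\<lambda>t. exp (\<eta>1*t))" "integrable N (\<lambda>t. exp (\<eta>2*t))"
    "integrable N (\<lambda>t. t * exp (\<eta>1*t))" using e1 e2 int_exp int_t_exp by auto
  have gint: "integrable N g" unfolding g_def
    by (intro Bochner_Integration.integrable_diff Bochner_Integration.integrable_mult_right Bochner_Integration.integrable_add i1)
  have Zp: "0 < Z \<eta>1" using Z_pos e1 by simp
  have ig: "(\<integral>t. g t \<partial>N) = Z \<eta>2 - exp (d*c) * (Z \<eta>1 + d * (Z1 \<eta>1 - c * Z \<eta>1))"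
    unfolding g_def Z_def Z1_def using i1
    by (simp add: Bochner_Integration.integral_diff Bochner_Integration.integral_add Bochner_Integration.integrable_diff Bochner_Integration.integrable_add)
  also have "Z1 \<eta>1 - c * Z \<eta>1 = 0" using Zp by (simp add: c_def m_eq[OF e1])
  finally have ig: "(\<integral>t. g t \<partial>N) = Z \<eta>2 - exp (d*c) * Z \<eta>1" by simp
  have "(\<integral>t. g t \<partial>N) \<noteq> 0"
  proof
    assume "(\<integral>t. g t \<partial>N) = 0"
    then have "AE t in N. g t = 0" using integral_nonneg_eq_0_iff_AE[OF gint] gnn by auto
    then have "AE t in N. t = c"
    proof (rule AE_mp, intro AE_I2 impI)
      fix t assume "g t = 0"
      then show "t = c" using pws[of t] unfolding g_eq by (cases "t = c") auto
    qed
    with nondeg show False by blast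
  qed
  moreover have "0 \<le> (\<integral>t. g t \<partial>N)" using gnn by (intro integral_nonneg_AE) auto
  ultimately have "exp (d*c) * Z \<eta>1 < Z \<eta>2" using ig by simp
  then have "ln (exp (d*c) * Z \<eta>1) < ln (Z \<eta>2)" using Zp by (intro ln_less_cancel_iff[THEN iffD2]) (auto simp: Z_pos e2)
  then have "d*c + ln (Z \<eta>1) < ln (Z \<eta>2)" using Zp by (simp add: ln_mult)
  then show ?thesis by (simp add: A_def d_def c_def)
qed

lemma m_strict_mono:
  assumes "\<eta>1 \<in> \<Theta>" "\<eta>2 \<in> \<Theta>" "\<eta>1 < \<eta>2" shows "m \<eta>1 < m \<eta>2"
proof -
  have a: "(\<eta>2 - \<eta>1) * m \<eta>1 < A \<eta>2 - A \<eta>1" using gibbs assms by auto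
  have b: "(\<eta>1 - \<eta>2) * m \<eta>2 < A \<eta>1 - A \<eta>2" using gibbs assms by auto
  have "(\<eta>2 - \<eta>1) * m \<eta>1 < (\<eta>2 - \<eta>1) * m \<eta>2" using a b by (simp add: algebra_simps)
  then show ?thesis using assms(3) by simp
qed

lemma m_inj: "\<eta>1 \<in> \<Theta> \<Longrightarrow> \<eta>2 \<in> \<Theta> \<Longrightarrow> m \<eta>1 = m \<eta>2 \<Longrightarrow> \<eta>1 = \<eta>2"
  using m_strict_mono by (metis less_irrefl linorder_neqE_linordered_idom)

abbreviation X where "X \<equiv> mean_set N \<Theta>"
abbreviation np where "np \<equiv> nat_param N \<Theta>"

lemma np: assumes "x \<in> X" shows "np x \<in> \<Theta>" "m (np x) = x"
proof -
  obtain \<eta> where e: "\<eta> \<in> \<Theta>" "m \<eta> = x" using assms by (auto simp: mean_set_def)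
  have "np x = \<eta>" unfolding nat_param_def
    using e m_inj by (intro the_equality) auto
  then show "np x \<in> \<Theta>" "m (np x) = x" using e by auto
qed

lemma np_m: "\<eta> \<in> \<Theta> \<Longrightarrow> np (m \<eta>) = \<eta>"
  using np[of "m \<eta>"] m_inj by (auto simp: mean_set_def)

lemma np_mono: "x \<in> X \<Longrightarrow> y \<in> X \<Longrightarrow> x \<le> y \<Longrightarrow> np x \<le> np y"
  using np m_strict_mono by (metis not_le order.asym order_le_less)

lemma np_less: "x \<in> X \<Longrightarrow> y \<in> X \<Longrightarrow> x < y \<Longrightarrow> np x < np y"
  using np m_strict_mono by (metis not_le order_le_less order.asym)

lemma KL_formula:
  assumes x: "x \<in> X" and y: "y \<in> X"
  shows "KL N \<Theta> x y = (np x - np y) * x - A (np x) + A (np y)"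
proof -
  define a where "a = np x"
  define b where "b = np y"
  have a: "a \<in> \<Theta>" "m a = x" using np[OF x] by (auto simp: a_def)
  have b: "b \<in> \<Theta>" using np[OF y] by (auto simp: b_def)
  have l: "ln (ef_dens N a t / ef_dens N b t) = (a - b) * t - A a + A b" for t
    using dens_pos by (simp add: ln_div ef_dens_def algebra_simps)
  have "ef_dens N a t * ln (ef_dens N a t / ef_dens N b t) = (a - b) * (t * ef_dens N a t) + (A b - A a) * ef_dens N a t" for t
    unfolding l by (simp add: algebra_simps)
  then have "KL N \<Theta> x y = (\<integral>t. (a - b) * (t * ef_dens N a t) + (A b - A a) * ef_dens N a t \<partial>N)"
    unfolding KL_def a_def[symmetric] b_def[symmetric] by (intro Bochner_Integration.integral_cong) auto
  also have "\<dots> = (a - b) * m a + (A b - A a)"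
    using a b by (simp add: int_dens int_t_dens integral_dens ef_mean_def)
  finally show ?thesis using a by (simp add: a_def b_def)
qed

lemma KL_nonneg: assumes "x \<in> X" "y \<in> X" shows "0 \<le> KL N \<Theta> x y"
proof (cases "np x = np y")
  case True then show ?thesis using KL_formula[OF assms] by simp
next
  case False
  have "(np y - np x) * m (np x) < A (np y) - A (np x)" using gibbs[of "np x" "np y"] np assms False by auto
  then show ?thesis using KL_formula[OF assms] np(2)[OF assms(1)] by (simp add: algebra_simps)
qed

lemma KL_three: assumes "x \<in> X" "y \<in> X" "z \<in> X"
  shows "KL N \<Theta> x z = KL N \<Theta> x y + KL N \<Theta> y z + (np y - np z) * (x - y)"
  using assms by (simp add: KL_formula algebra_simps)

lemma KL_mono_up: assumes "x \<in> X" "y \<in> X" "z \<in> X" "x \<le> y" "y \<le> z"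
  shows "KL N \<Theta> x y \<le> KL N \<Theta> x z"
proof -
  have "np y \<le> np z" using np_mono assms by auto
  then have "0 \<le> (np y - np z) * (x - y)" using assms by (intro mult_nonpos_nonpos) auto
  then show ?thesis using KL_three[OF assms(1-3)] KL_nonneg[OF assms(2,3)] by linarith
qed

lemma KL_mono_down: assumes "x \<in> X" "y \<in> X" "z \<in> X" "z \<le> y" "y \<le> x"
  shows "KL N \<Theta> x y \<le> KL N \<Theta> x z"
proof -
  have "np z \<le> np y" using np_mono assms by auto
  then have "0 \<le> (np y - np z) * (x - y)" using assms by (intro mult_nonneg_nonneg) auto
  then show ?thesis using KL_three[OF assms(1-3)] KL_nonneg[OF assms(2,3)] by linarith
qed

lemma KL_self: "KL N \<Theta> x x = 0"
  by (simp add: KL_def dens_ne)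


lemma Z_convex: "convex_on \<Theta> Z"
  unfolding convex_on_def
proof (intro conjI ballI allI impI)
  show "convex \<Theta>" using int_Theta is_interval_convex by blast
  fix x y u v :: real assume xy: "x \<in> \<Theta>" "y \<in> \<Theta>" and uv: "0 \<le> u" "0 \<le> v" "u + v = 1"
  have pw: "exp ((u *\<^sub>R x + v *\<^sub>R y) * t) \<le> u * exp (x*t) + v * exp (y*t)" for t
  proof -
    have "exp ((1 - v) *\<^sub>R (x*t) + v *\<^sub>R (y*t)) \<le> (1 - v) * exp (x*t) + v * exp (y*t)"
      using uv by (intro convex_onD[OF exp_convex]) auto
    moreover have u: "u = 1 - v" using uv by simp
    ultimately show ?thesis unfolding u by (simp add: algebra_simps)
  qed
  have cm: "u *\<^sub>R x + v *\<^sub>R y \<in> \<Theta>"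
    using convexD[OF is_interval_convex[OF int_Theta] xy uv] .
  have "Z (u *\<^sub>R x + v *\<^sub>R y) \<le> (\<integral>t. u * exp (x*t) + v * exp (y*t) \<partial>N)"
    unfolding Z_def using pw xy cm
    by (intro integral_mono Bochner_Integration.integrable_add Bochner_Integration.integrable_mult_right int_exp)
       (auto simp: is_interval_convex[OF int_Theta, unfolded convex_def] uv)
  also have "\<dots> = u * Z x + v * Z y" using xy int_exp by (simp add: Z_def)
  finally show "Z (u *\<^sub>R x + v *\<^sub>R y) \<le> u * Z x + v * Z y" .
qed

lemma A_cont: "continuous_on \<Theta> A"
proof -
  have "continuous_on \<Theta> Z" using convex_on_continuous[OF open_Theta Z_convex] .
  then have "continuous_on \<Theta> (\<lambda>\<eta>. ln (Z \<eta>))"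
    using Z_pos by (intro continuous_intros) (auto simp: less_imp_neq[symmetric] dest: Z_pos)
  then show ?thesis by (simp add: A_def[abs_def])
qed

lemma np_cont_eps:
  assumes x0: "x0 \<in> X" and e: "0 < e"
  shows "\<exists>d>0. \<forall>x\<in>X. \<bar>x - x0\<bar> < d \<longrightarrow> \<bar>np x - np x0\<bar> < e"
proof -
  define a where "a = np x0"
  have a: "a \<in> \<Theta>" "m a = x0" using np[OF x0] by (auto simp: a_def)
  obtain r where r: "r > 0" "ball a r \<subseteq> \<Theta>" using open_Theta a open_contains_ball by blast
  define h where "h = min r e / 2"
  have h: "0 < h" "h < e" "a + h \<in> \<Theta>" "a - h \<in> \<Theta>" using r e by (auto simp: h_def dist_real_def)
  have up: "x0 < m (a + h)" and dn: "m (a - h) < x0" using m_strict_mono h a by auto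
  define d where "d = min (m (a+h) - x0) (x0 - m (a-h))"
  have "d > 0" using up dn by (simp add: d_def)
  moreover have "\<bar>np x - np x0\<bar> < e" if x: "x \<in> X" "\<bar>x - x0\<bar> < d" for x
  proof -
    have "x < m (a+h)" "m (a-h) < x" using x by (auto simp: d_def)
    then have "np x < a + h" "a - h < np x"
      using np_less[of x "m (a+h)"] np_less[of "m (a-h)" x] x h np_m by (auto simp: mean_set_def)
    then show ?thesis using h by (simp add: a_def)
  qed
  ultimately show ?thesis by blast
qed

lemma np_tendsto:
  assumes x0: "x0 \<in> X" and xs: "\<forall>\<^sub>F n in F. xs n \<in> X" and lim: "(xs \<longlongrightarrow> x0) F"
  shows "((\<lambda>n. np (xs n)) \<longlongrightarrow> np x0) F"
proof (rule tendstoI)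
  fix e :: real assume "e > 0"
  then obtain d where d: "d > 0" "\<forall>x\<in>X. \<bar>x - x0\<bar> < d \<longrightarrow> \<bar>np x - np x0\<bar> < e"
    using np_cont_eps[OF x0] by blast
  have "\<forall>\<^sub>F n in F. dist (xs n) x0 < d" using lim d(1) by (rule tendstoD)
  with xs show "\<forall>\<^sub>F n in F. dist (np (xs n)) (np x0) < e"
    by eventually_elim (use d in \<open>auto simp: dist_real_def\<close>)
qed

lemma KL_tendsto:
  assumes x0: "x0 \<in> X" and xs: "\<forall>\<^sub>F n in F. xs n \<in> X" and lim: "(xs \<longlongrightarrow> x0) F" and y: "y \<in> X"
  shows "((\<lambda>n. KL N \<Theta> (xs n) y) \<longlongrightarrow> KL N \<Theta> x0 y) F"
proof -
  have np1: "((\<lambda>n. np (xs n)) \<longlongrightarrow> np x0) F" by (rule np_tendsto[OF x0 xs lim])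
  have "((\<lambda>n. A (np (xs n))) \<longlongrightarrow> A (np x0)) F"
    using xs np[OF x0] by (intro continuous_on_tendsto_compose[OF A_cont np1]) (auto elim: eventually_mono simp: np)
  then have "((\<lambda>n. (np (xs n) - np y) * xs n - A (np (xs n)) + A (np y)) \<longlongrightarrow> (np x0 - np y) * x0 - A (np x0) + A (np y)) F"
    by (intro tendsto_intros np1 lim)
  moreover have "\<forall>\<^sub>F n in F. KL N \<Theta> (xs n) y = (np (xs n) - np y) * xs n - A (np (xs n)) + A (np y)"
    using xs by eventually_elim (simp add: KL_formula y)
  ultimately show ?thesis using KL_formula[OF x0 y] by (simp add: tendsto_cong)
qed

lemma below_approx:
  assumes x: "x \<in> X" and th: "\<theta> \<in> X" and d: "0 < d"
  shows "\<exists>y\<in>X. y < \<theta> \<and> KL N \<Theta> x y \<le> KL N \<Theta> x \<theta> + d"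
proof -
  define a where "a = np \<theta>"
  have a: "a \<in> \<Theta>" "m a = \<theta>" using np[OF th] by (auto simp: a_def)
  define g where "g \<eta> = (np x - \<eta>) * x - A (np x) + A \<eta>" for \<eta>
  have "continuous_on \<Theta> g" unfolding g_def by (intro continuous_intros A_cont)
  then have "isCont g a" using a open_Theta continuous_on_eq_continuous_at by blast
  then obtain r where r: "r > 0" "\<forall>\<eta>. \<bar>\<eta> - a\<bar> < r \<longrightarrow> \<bar>g \<eta> - g a\<bar> < d"
    using d unfolding continuous_at_eps_delta dist_real_def by blast
  obtain r2 where r2: "r2 > 0" "ball a r2 \<subseteq> \<Theta>" using open_Theta a open_contains_ball by blast
  define \<eta> where "\<eta> = a - min r r2 / 2"
  have e: "\<eta> \<in> \<Theta>" "\<eta> < a" "\<bar>\<eta> - a\<bar> < r" using r r2 by (auto simp: \<eta>_def dist_real_def)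
  define y where "y = m \<eta>"
  have y: "y \<in> X" "np y = \<eta>" using e np_m by (auto simp: y_def mean_set_def)
  have "y < \<theta>" using m_strict_mono e a by (auto simp: y_def)
  moreover have "KL N \<Theta> x y = g \<eta>" using KL_formula[OF x y(1)] y by (simp add: g_def)
  moreover have "KL N \<Theta> x \<theta> = g a" using KL_formula[OF x th] by (simp add: g_def a_def)
  ultimately show ?thesis using r(2) e(3) y(1) by force
qed

end


lemma leaves_finite: "finite (leaves s)"
  by (induction s rule: leaves.induct) auto

lemma leaves_ne: "wf_tree s \<Longrightarrow> leaves s \<noteq> {}"
  by (induction s rule: leaves.induct) (auto simp: neq_Nil_conv)

lemma set_leaf_list: "set (leaf_list s) = leaves s"
  by (induction s rule: leaves.induct) auto

lemma subtrees_refl: "s \<in> subtrees s"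
  by (cases s) auto

lemma subtrees_trans: "s \<in> subtrees T \<Longrightarrow> subtrees s \<subseteq> subtrees T"
  by (induction T rule: subtrees.induct) auto

lemma child_subtree: "Node k cs \<in> subtrees T \<Longrightarrow> c \<in> set cs \<Longrightarrow> c \<in> subtrees T"
  using subtrees_trans[of "Node k cs" T] subtrees_refl[of c] by auto

lemma subtree_leaves: "s \<in> subtrees T \<Longrightarrow> leaves s \<subseteq> leaves T"
  by (induction T rule: subtrees.induct) auto

lemma subtree_wf: "wf_tree T \<Longrightarrow> s \<in> subtrees T \<Longrightarrow> wf_tree s"
  by (induction T rule: subtrees.induct) auto

lemma distinct_concat_sub: "distinct (concat (map f xs)) \<Longrightarrow> x \<in> set xs \<Longrightarrow> distinct (f x)"
  by (induction xs) auto

lemma subtree_distinct: "distinct (leaf_list T) \<Longrightarrow> s \<in> subtrees T \<Longrightarrow> distinct (leaf_list s)"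
  by (induction T rule: subtrees.induct) (auto dest: distinct_concat_sub)

lemma subtree_game: "game_tree T \<Longrightarrow> s \<in> subtrees T \<Longrightarrow> game_tree s"
  using subtree_wf subtree_distinct by (auto simp: game_tree_def)

lemma distinct_concat_disj:
  assumes "distinct (concat (map f xs))" "\<forall>x\<in>set xs. f x \<noteq> []"
    "x \<in> set xs" "y \<in> set xs" "x \<noteq> y"
  shows "set (f x) \<inter> set (f y) = {}"
  using assms
proof (induction xs)
  case (Cons a xs)
  show ?case
  proof (cases "x = a \<or> y = a")
    case True
    then show ?thesis using Cons.prems by auto
  next
    case False
    then show ?thesis using Cons by auto
  qed
qed auto

lemma leaf_list_ne: "wf_tree s \<Longrightarrow> leaf_list s \<noteq> []"
  using leaves_ne[of s] set_leaf_list[of s] by auto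

lemma children_disj:
  assumes "game_tree (Node k cs)" "c1 \<in> set cs" "c2 \<in> set cs" "c1 \<noteq> c2"
  shows "leaves c1 \<inter> leaves c2 = {}"
proof -
  have "set (leaf_list c1) \<inter> set (leaf_list c2) = {}"
    using assms by (intro distinct_concat_disj[of leaf_list cs]) (auto simp: game_tree_def leaf_list_ne)
  then show ?thesis by (simp add: set_leaf_list)
qed

lemma children_disj_sub:
  assumes "game_tree T" "Node k cs \<in> subtrees T" "c1 \<in> set cs" "c2 \<in> set cs" "c1 \<noteq> c2"
  shows "leaves c1 \<inter> leaves c2 = {}"
  using children_disj subtree_game assms by blast

lemma val_cong: "(\<forall>l\<in>leaves s. a l = b l) \<Longrightarrow> val a s = val b s"
proof (induction a s rule: val.induct)
  case (2 lam cs)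
  have "set (map (val lam) cs) = set (map (val b) cs)" using 2 by auto
  then show ?case by simp
next
  case (3 lam cs)
  have "set (map (val lam) cs) = set (map (val b) cs)" using 3 by auto
  then show ?case by simp
qed auto

definition goal :: "real \<Rightarrow> bool \<Rightarrow> ('l \<Rightarrow> real) \<Rightarrow> 'l gtree \<Rightarrow> bool" where
  "goal \<theta> win lam s \<longleftrightarrow> (if win then val lam s < \<theta> else \<theta> \<le> val lam s)"

lemma goal_cong: "(\<forall>l\<in>leaves s. a l = b l) \<Longrightarrow> goal \<theta> win a s = goal \<theta> win b s"
  using val_cong unfolding goal_def by metis

lemma goal_P:
  assumes "(k = MAXnode) = win" "cs \<noteq> []"
  shows "goal \<theta> win lam (Node k cs) \<longleftrightarrow> (\<forall>c\<in>set cs. goal \<theta> win lam c)"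
  using assms by (cases k; cases win) (auto simp: goal_def)

lemma goal_Q:
  assumes "(k = MAXnode) \<noteq> win" "cs \<noteq> []"
  shows "goal \<theta> win lam (Node k cs) \<longleftrightarrow> (\<exists>c\<in>set cs. goal \<theta> win lam c)"
  using assms by (cases k; cases win) (auto simp: goal_def Max_ge_iff Min_less_iff)

lemma wins_goal: "wins \<theta> lam T \<noteq> win \<longleftrightarrow> goal \<theta> win lam T"
  by (auto simp: wins_def goal_def)


locale TR =
  fixes dv :: "real \<Rightarrow> real \<Rightarrow> real" and X :: "real set" and \<theta> :: real and T :: "'l gtree"
  assumes gt: "game_tree T" and thX: "\<theta> \<in> X"
    and dv_nn: "x \<in> X \<Longrightarrow> y \<in> X \<Longrightarrow> 0 \<le> dv x y"
    and dv_self: "dv x x = 0"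
    and dv_up: "x \<in> X \<Longrightarrow> y \<in> X \<Longrightarrow> z \<in> X \<Longrightarrow> x \<le> y \<Longrightarrow> y \<le> z \<Longrightarrow> dv x y \<le> dv x z"
    and dv_down: "x \<in> X \<Longrightarrow> y \<in> X \<Longrightarrow> z \<in> X \<Longrightarrow> z \<le> y \<Longrightarrow> y \<le> x \<Longrightarrow> dv x y \<le> dv x z"
    and dv_below: "x \<in> X \<Longrightarrow> 0 < d \<Longrightarrow> \<exists>y\<in>X. y < \<theta> \<and> dv x y \<le> dv x \<theta> + d"
    and dv_tendsto: "x0 \<in> X \<Longrightarrow> (\<forall>n. (xs :: nat \<Rightarrow> real) n \<in> X) \<Longrightarrow> (xs \<longlongrightarrow> x0) sequentially \<Longrightarrow>
        ((\<lambda>n. dv (xs n) \<theta>) \<longlongrightarrow> dv x0 \<theta>) sequentially"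
begin

lemma sub_wf: "s \<in> subtrees T \<Longrightarrow> wf_tree s"
  using gt subtree_wf by (auto simp: game_tree_def)

lemma dval_nn:
  assumes "wf_tree s" "\<forall>l\<in>leaves s. \<nu> l \<in> X"
  shows "0 \<le> dval dv \<theta> win \<nu> s"
  using assms
proof (induction s)
  case (Leaf l)
  then show ?case using dv_nn thX by simp
next
  case (Node k cs)
  have ne: "cs \<noteq> []" using Node by auto
  show ?case
  proof (cases "(k = MAXnode) = win")
    case True
    then obtain c where c: "c \<in> set cs" using ne by (cases cs) auto
    have "0 \<le> dval dv \<theta> win \<nu> c" using Node c by auto
    also have "\<dots> \<le> Max (set (map (dval dv \<theta> win \<nu>) cs))" using c by (intro Max_ge) auto
    finally show ?thesis using True by simp
  next
    case False
    then show ?thesis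
      by (auto intro!: sum_nonneg simp: less_imp_le)
  qed
qed


lemma dval_zero:
  assumes "wf_tree (Node k cs)" "\<forall>l\<in>leaves (Node k cs). \<nu> l \<in> X"
    "\<not> ((k = MAXnode) = win \<and> 0 < dval dv \<theta> win \<nu> (Node k cs))"
    "\<not> ((k = MAXnode) \<noteq> win \<and> (\<forall>c\<in>set cs. 0 < dval dv \<theta> win \<nu> c))"
  shows "dval dv \<theta> win \<nu> (Node k cs) = 0"
proof (cases "(k = MAXnode) = win")
  case True
  then show ?thesis using assms(3) dval_nn[OF assms(1,2), of win] by simp
next
  case False
  then have "\<not> (\<forall>c\<in>set cs. 0 < dval dv \<theta> win \<nu> c)" using assms(4) by blast
  then show ?thesis using False by (simp only: dval.simps if_False)
qed

abbreviation "D \<nu> \<equiv> dval dv \<theta> (wins \<theta> \<nu> T) \<nu>"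

lemma vw_leaf: "valid_weights dv \<theta> \<nu> T w \<Longrightarrow> Leaf l \<in> subtrees T \<Longrightarrow> w (Leaf l) = (\<lambda>m. if m = l then 1 else 0)"
  unfolding valid_weights_def by fastforce

lemma vw_P: "valid_weights dv \<theta> \<nu> T w \<Longrightarrow> Node k cs \<in> subtrees T \<Longrightarrow> (k = MAXnode) = wins \<theta> \<nu> T \<Longrightarrow>
   0 < D \<nu> (Node k cs) \<Longrightarrow>
   \<exists>c\<in>set cs. D \<nu> c = D \<nu> (Node k cs) \<and> w (Node k cs) = (\<lambda>m. if m \<in> leaves c then w c m else 0)"
  unfolding valid_weights_def by (drule bspec) auto

lemma vw_Q: "valid_weights dv \<theta> \<nu> T w \<Longrightarrow> Node k cs \<in> subtrees T \<Longrightarrow> (k = MAXnode) \<noteq> wins \<theta> \<nu> T \<Longrightarrow>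
   \<forall>c\<in>set cs. 0 < D \<nu> c \<Longrightarrow>
   w (Node k cs) = (\<lambda>m. \<Sum>c\<in>set cs. if m \<in> leaves c then
                  (w c m / D \<nu> c) / (\<Sum>c'\<in>set cs. 1 / D \<nu> c') else 0)"
  unfolding valid_weights_def by (drule bspec) auto

lemma vw_Z: "valid_weights dv \<theta> \<nu> T w \<Longrightarrow> Node k cs \<in> subtrees T \<Longrightarrow> D \<nu> (Node k cs) = 0 \<Longrightarrow>
   w (Node k cs) \<in> leaf_simplex (leaves (Node k cs))"
  unfolding valid_weights_def leaf_simplex_def by (drule bspec) auto

lemma vw_Q_at:
  assumes "valid_weights dv \<theta> \<nu> T w" "Node k cs \<in> subtrees T" "(k = MAXnode) \<noteq> wins \<theta> \<nu> T"
    "\<forall>c\<in>set cs. 0 < D \<nu> c" "c \<in> set cs" "m \<in> leaves c"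
  shows "w (Node k cs) m = (w c m / D \<nu> c) / (\<Sum>c'\<in>set cs. 1 / D \<nu> c')"
proof -
  have "w (Node k cs) m = (\<Sum>c'\<in>set cs. if m \<in> leaves c' then
                  (w c' m / D \<nu> c') / (\<Sum>c'\<in>set cs. 1 / D \<nu> c') else 0)"
    using vw_Q[OF assms(1-4)] by simp
  also have "\<dots> = (\<Sum>c'\<in>set cs. if c' = c then
                  (w c' m / D \<nu> c') / (\<Sum>c'\<in>set cs. 1 / D \<nu> c') else 0)"
  proof (rule sum.cong[OF refl])
    fix c' assume "c' \<in> set cs"
    then show "(if m \<in> leaves c' then (w c' m / D \<nu> c') / (\<Sum>c'\<in>set cs. 1 / D \<nu> c') else 0) =
      (if c' = c then (w c' m / D \<nu> c') / (\<Sum>c'\<in>set cs. 1 / D \<nu> c') else 0)"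
      using children_disj_sub[OF gt assms(2) _ assms(5)] assms(6) by auto
  qed
  also have "\<dots> = (w c m / D \<nu> c) / (\<Sum>c'\<in>set cs. 1 / D \<nu> c')" using assms(5) by simp
  finally show ?thesis .
qed

lemma simplex_nn: "f \<in> leaf_simplex S \<Longrightarrow> 0 \<le> f m"
  unfolding leaf_simplex_def by (cases "m \<in> S") auto

lemma leaves_node: "leaves (Node k cs) = (\<Union>c\<in>set cs. leaves c)" by simp

lemma vw_simplex:
  assumes vw: "valid_weights dv \<theta> \<nu> T w" and X: "\<forall>l\<in>leaves T. \<nu> l \<in> X"
  shows "s \<in> subtrees T \<Longrightarrow> w s \<in> leaf_simplex (leaves s)"
proof (induction s)
  case (Leaf l)
  then show ?case using vw_leaf[OF vw] by (auto simp: leaf_simplex_def)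
next
  case (Node k cs)
  let ?s = "Node k cs"
  have sub: "c \<in> set cs \<Longrightarrow> c \<in> subtrees T" for c using child_subtree Node.prems by blast
  have IH: "c \<in> set cs \<Longrightarrow> w c \<in> leaf_simplex (leaves c)" for c using Node.IH sub by blast
  have nn: "0 \<le> D \<nu> ?s" using dval_nn sub_wf[OF Node.prems] X subtree_leaves[OF Node.prems] by blast
  show ?case
  proof (cases "(k = MAXnode) = wins \<theta> \<nu> T \<and> 0 < D \<nu> ?s")
    case True
    then obtain c where c: "c \<in> set cs" "w ?s = (\<lambda>m. if m \<in> leaves c then w c m else 0)"
      using vw_P[OF vw Node.prems] by blast
    have sc: "leaves c \<subseteq> leaves ?s" using c by auto
    have "sum (w ?s) (leaves ?s) = sum (w ?s) (leaves c)"
      using sc by (intro sum.mono_neutral_right) (auto simp: c(2) leaves_finite simp del: leaves.simps)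
    also have "\<dots> = sum (w c) (leaves c)" by (simp add: c(2))
    finally show ?thesis using IH[OF c(1)] c sc by (auto simp: leaf_simplex_def simp del: leaves.simps)
  next
    case False
    show ?thesis
    proof (cases "(k = MAXnode) \<noteq> wins \<theta> \<nu> T \<and> (\<forall>c\<in>set cs. 0 < D \<nu> c)")
      case True
      define H where "H = (\<Sum>c'\<in>set cs. 1 / D \<nu> c')"
      have ne: "cs \<noteq> []" using sub_wf[OF Node.prems] by simp
      have Hp: "0 < H" unfolding H_def using True ne by (intro sum_pos) auto
      have ws: "w ?s = (\<lambda>m. \<Sum>c\<in>set cs. if m \<in> leaves c then (w c m / D \<nu> c) / H else 0)"
        using vw_Q[OF vw Node.prems] True unfolding H_def by blast
      have "0 \<le> w ?s m" for m unfolding ws using IH True Hp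
        by (intro sum_nonneg) (auto intro!: divide_nonneg_pos simplex_nn[of "w _" "leaves _"])
      moreover have "w ?s m = 0" if "m \<notin> leaves ?s" for m unfolding ws using that by auto
      moreover have "sum (w ?s) (leaves ?s) = 1"
      proof -
        have "sum (w ?s) (leaves ?s) = (\<Sum>c\<in>set cs. \<Sum>m\<in>leaves ?s. if m \<in> leaves c then (w c m / D \<nu> c) / H else 0)"
          unfolding ws by (rule sum.swap)
        also have "\<dots> = (\<Sum>c\<in>set cs. \<Sum>m\<in>leaves c. (w c m / D \<nu> c) / H)"
        proof (rule sum.cong[OF refl])
          fix c assume c: "c \<in> set cs"
          have e1: "(\<Sum>m\<in>leaves ?s. if m \<in> leaves c then (w c m / D \<nu> c) / H else 0) =
                (\<Sum>m\<in>leaves ?s \<inter> leaves c. (w c m / D \<nu> c) / H)"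
            by (rule sum.inter_restrict[OF leaves_finite, symmetric])
          have e2: "leaves ?s \<inter> leaves c = leaves c" using c by auto
          show "(\<Sum>m\<in>leaves ?s. if m \<in> leaves c then (w c m / D \<nu> c) / H else 0) =
                (\<Sum>m\<in>leaves c. (w c m / D \<nu> c) / H)" unfolding e1 e2 ..
        qed
        also have "\<dots> = (\<Sum>c\<in>set cs. (1 / D \<nu> c) / H)"
        proof (rule sum.cong[OF refl])
          fix c assume c: "c \<in> set cs"
          have "(\<Sum>m\<in>leaves c. (w c m / D \<nu> c) / H) = sum (w c) (leaves c) / D \<nu> c / H"
            by (simp add: sum_divide_distrib)
          then show "(\<Sum>m\<in>leaves c. (w c m / D \<nu> c) / H) = (1 / D \<nu> c) / H"
            using IH[OF c] by (simp add: leaf_simplex_def)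
        qed
        also have "\<dots> = H / H" unfolding sum_divide_distrib[symmetric] H_def ..
        finally show ?thesis using Hp by simp
      qed
      ultimately show ?thesis by (auto simp: leaf_simplex_def simp del: leaves.simps)
    next
      case False2: False
      have "D \<nu> ?s = 0" using False False2 nn by (auto split: if_splits)
      then show ?thesis using vw_Z[OF vw Node.prems] by simp
    qed
  qed
qed


lemma lower:
  assumes vw: "valid_weights dv \<theta> \<mu> T w" and X: "\<forall>l\<in>leaves T. \<mu> l \<in> X"
  shows "s \<in> subtrees T \<Longrightarrow> (\<forall>l\<in>leaves s. lam l \<in> X) \<Longrightarrow> goal \<theta> (wins \<theta> \<mu> T) lam s \<Longrightarrow>
    D \<mu> s \<le> (\<Sum>l\<in>leaves s. w s l * dv (\<mu> l) (lam l))"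
proof (induction s)
  case (Leaf l)
  have ml: "\<mu> l \<in> X" "lam l \<in> X" using Leaf X subtree_leaves[OF Leaf.prems(1)] by auto
  have "D \<mu> (Leaf l) \<le> dv (\<mu> l) (lam l)"
    using Leaf.prems(3) dv_down[OF ml(1) thX ml(2)] dv_up[OF ml(1) thX ml(2)] dv_nn[OF ml]
    by (auto simp: goal_def)
  then show ?case using vw_leaf[OF vw Leaf.prems(1)] by simp
next
  case (Node k cs)
  let ?s = "Node k cs"
  let ?win = "wins \<theta> \<mu> T"
  have sub: "c \<in> set cs \<Longrightarrow> c \<in> subtrees T" for c using child_subtree Node.prems by blast
  have ne: "cs \<noteq> []" using sub_wf[OF Node.prems(1)] by simp
  have lX: "l \<in> leaves ?s \<Longrightarrow> \<mu> l \<in> X \<and> lam l \<in> X" for l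
    using X Node.prems subtree_leaves[OF Node.prems(1)] by blast
  have Wnn: "0 \<le> (\<Sum>l\<in>leaves ?s. w ?s l * dv (\<mu> l) (lam l))"
    using vw_simplex[OF vw X Node.prems(1)] lX
    by (intro sum_nonneg mult_nonneg_nonneg simplex_nn[of "w ?s" "leaves ?s"] dv_nn) auto
  show ?case
  proof (cases "(k = MAXnode) = ?win \<and> 0 < D \<mu> ?s")
    case True
    then obtain c where c: "c \<in> set cs" "D \<mu> c = D \<mu> ?s" "w ?s = (\<lambda>m. if m \<in> leaves c then w c m else 0)"
      using vw_P[OF vw Node.prems(1)] by blast
    have gc: "goal \<theta> ?win lam c" using goal_P[OF _ ne] True Node.prems(3) c(1) by blast
    have "D \<mu> c \<le> (\<Sum>l\<in>leaves c. w c l * dv (\<mu> l) (lam l))"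
      using Node.IH[OF c(1) sub[OF c(1)]] gc Node.prems(2) c(1) by auto
    also have "\<dots> = (\<Sum>l\<in>leaves ?s \<inter> leaves c. w c l * dv (\<mu> l) (lam l))"
    proof -
      have "leaves ?s \<inter> leaves c = leaves c" using c(1) by auto
      then show ?thesis by simp
    qed
    also have "\<dots> = (\<Sum>l\<in>leaves ?s. w ?s l * dv (\<mu> l) (lam l))"
      unfolding sum.inter_restrict[OF leaves_finite] c(3) by (intro sum.cong) auto
    finally show ?thesis using c(2) by simp
  next
    case False
    show ?thesis
    proof (cases "(k = MAXnode) \<noteq> ?win \<and> (\<forall>c\<in>set cs. 0 < D \<mu> c)")
      case True
      define H where "H = (\<Sum>c'\<in>set cs. 1 / D \<mu> c')"
      have Hp: "0 < H" unfolding H_def using True ne by (intro sum_pos) auto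
      obtain c where c: "c \<in> set cs" "goal \<theta> ?win lam c" using goal_Q[OF _ ne] True Node.prems(3) by blast
      have Dc: "0 < D \<mu> c" using True c by auto
      have wc: "m \<in> leaves c \<Longrightarrow> w ?s m = (w c m / D \<mu> c) / H" for m
        using vw_Q_at[OF vw Node.prems(1) _ _ c(1)] True by (simp add: H_def)
      have "D \<mu> ?s = 1 / H" using True by (simp add: H_def inverse_eq_divide)
      also have "\<dots> = (1 / (D \<mu> c * H)) * D \<mu> c" using Dc by simp
      also have "\<dots> \<le> (1 / (D \<mu> c * H)) * (\<Sum>l\<in>leaves c. w c l * dv (\<mu> l) (lam l))"
        using Node.IH[OF c(1) sub[OF c(1)]] c Node.prems(2) Dc Hp by (intro mult_left_mono) auto
      also have "\<dots> = (\<Sum>l\<in>leaves c. w ?s l * dv (\<mu> l) (lam l))"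
        by (simp add: sum_distrib_left wc)
      also have "\<dots> \<le> (\<Sum>l\<in>leaves ?s. w ?s l * dv (\<mu> l) (lam l))"
        using vw_simplex[OF vw X Node.prems(1)] lX c(1)
        by (intro sum_mono2 leaves_finite mult_nonneg_nonneg simplex_nn[of "w ?s" "leaves ?s"] dv_nn) auto
      finally show ?thesis .
    next
      case False2: False
      have "D \<mu> ?s = 0"
        using False False2 lX by (intro dval_zero sub_wf[OF Node.prems(1)]) auto
      then show ?thesis using Wnn by simp
    qed
  qed
qed


lemma sum_leaves_node:
  assumes "Node k cs \<in> subtrees T"
  shows "sum g (leaves (Node k cs)) = (\<Sum>c\<in>set cs. sum g (leaves c))"
  unfolding leaves_node
  by (rule sum.UNION_disjoint) (auto simp: leaves_finite dest: children_disj_sub[OF gt assms])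

lemma some_child:
  assumes "Node k cs \<in> subtrees T" "c \<in> set cs" "l \<in> leaves c"
  shows "(SOME c. c \<in> set cs \<and> l \<in> leaves c) = c"
proof (rule some_equality)
  show "c \<in> set cs \<and> l \<in> leaves c" using assms by auto
  fix c' assume "c' \<in> set cs \<and> l \<in> leaves c'"
  then show "c' = c" using children_disj_sub[OF gt assms(1) _ assms(2), of c'] assms(3) by auto
qed

lemma upper:
  assumes X: "\<forall>l\<in>leaves T. \<mu> l \<in> X" and wnn: "\<forall>l\<in>leaves T. 0 \<le> w l"
  shows "s \<in> subtrees T \<Longrightarrow> 0 < \<delta> \<Longrightarrow> \<exists>lam. (\<forall>l\<in>leaves s. lam l \<in> X) \<and> goal \<theta> win lam s \<and>
     (\<Sum>l\<in>leaves s. w l * dv (\<mu> l) (lam l)) \<le> dval dv \<theta> win \<mu> s * (\<Sum>l\<in>leaves s. w l) + \<delta>"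
proof (induction s arbitrary: \<delta>)
  case (Leaf l)
  have x: "\<mu> l \<in> X" and W: "0 \<le> w l" using X wnn subtree_leaves[OF Leaf.prems(1)] by auto
  show ?case
  proof (cases win)
    case True
    show ?thesis
    proof (cases "\<theta> \<le> \<mu> l")
      case True2: True
      define d' where "d' = \<delta> / (w l + 1)"
      have d': "0 < d'" using Leaf.prems W by (simp add: d'_def)
      obtain y where y: "y \<in> X" "y < \<theta>" "dv (\<mu> l) y \<le> dv (\<mu> l) \<theta> + d'" using dv_below[OF x d'] by blast
      have "w l * dv (\<mu> l) y \<le> w l * (dv (\<mu> l) \<theta> + d')" using y W by (intro mult_left_mono) auto
      also have "w l * d' \<le> \<delta>" using W Leaf.prems by (simp add: d'_def field_simps)
      then have "w l * (dv (\<mu> l) \<theta> + d') \<le> dv (\<mu> l) \<theta> * w l + \<delta>" by (simp add: algebra_simps)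
      finally show ?thesis using True True2 y
        by (intro exI[of _ "\<lambda>_. y"]) (auto simp: goal_def)
    next
      case False
      then show ?thesis using True Leaf.prems x
        by (intro exI[of _ \<mu>]) (auto simp: goal_def dv_self)
    qed
  next
    case False
    show ?thesis
    proof (cases "\<mu> l < \<theta>")
      case True
      then show ?thesis using False Leaf.prems thX
        by (intro exI[of _ "\<lambda>_. \<theta>"]) (auto simp: goal_def)
    next
      case False2: False
      then show ?thesis using False Leaf.prems x
        by (intro exI[of _ \<mu>]) (auto simp: goal_def dv_self)
    qed
  qed
next
  case (Node k cs)
  let ?s = "Node k cs"
  let ?D = "dval dv \<theta> win \<mu>"
  have sub: "c \<in> set cs \<Longrightarrow> c \<in> subtrees T" for c using child_subtree Node.prems by blast
  have ne: "cs \<noteq> []" using sub_wf[OF Node.prems(1)] by simp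
  have lX: "l \<in> leaves ?s \<Longrightarrow> \<mu> l \<in> X \<and> 0 \<le> w l" for l
    using X wnn subtree_leaves[OF Node.prems(1)] by blast
  have Dnn: "c \<in> set cs \<Longrightarrow> 0 \<le> ?D c" for c
    using lX by (intro dval_nn sub_wf sub) auto
  have Wnn: "c \<in> set cs \<Longrightarrow> 0 \<le> (\<Sum>l\<in>leaves c. w l)" for c
    using lX by (intro sum_nonneg) auto
  show ?case
  proof (cases "(k = MAXnode) = win")
    case True
    define n where "n = card (set cs)"
    have n: "0 < n" using ne by (simp add: n_def card_gt_0_iff)
    define d' where "d' = \<delta> / n"
    have d': "0 < d'" using n Node.prems by (simp add: d'_def)
    have "\<forall>c\<in>set cs. \<exists>lam. (\<forall>l\<in>leaves c. lam l \<in> X) \<and> goal \<theta> win lam c \<and>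
     (\<Sum>l\<in>leaves c. w l * dv (\<mu> l) (lam l)) \<le> ?D c * (\<Sum>l\<in>leaves c. w l) + d'"
      using Node.IH sub d' by blast
    then obtain f where f: "\<And>c. c \<in> set cs \<Longrightarrow> (\<forall>l\<in>leaves c. f c l \<in> X) \<and> goal \<theta> win (f c) c \<and>
     (\<Sum>l\<in>leaves c. w l * dv (\<mu> l) (f c l)) \<le> ?D c * (\<Sum>l\<in>leaves c. w l) + d'"
      by metis
    define lam where "lam l = f (SOME c. c \<in> set cs \<and> l \<in> leaves c) l" for l
    have lamc: "c \<in> set cs \<Longrightarrow> l \<in> leaves c \<Longrightarrow> lam l = f c l" for c l
      using some_child[OF Node.prems(1)] by (simp add: lam_def)
    have "goal \<theta> win lam ?s"
      unfolding goal_P[OF True ne]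
    proof
      fix c assume c: "c \<in> set cs"
      have "goal \<theta> win (f c) c" using f[OF c] by blast
      then show "goal \<theta> win lam c" using goal_cong[of c lam "f c"] lamc[OF c] by auto
    qed
    moreover have "\<forall>l\<in>leaves ?s. lam l \<in> X" using f lamc by auto
    moreover have "(\<Sum>l\<in>leaves ?s. w l * dv (\<mu> l) (lam l)) \<le> ?D ?s * (\<Sum>l\<in>leaves ?s. w l) + \<delta>"
    proof -
      have "(\<Sum>l\<in>leaves ?s. w l * dv (\<mu> l) (lam l)) = (\<Sum>c\<in>set cs. \<Sum>l\<in>leaves c. w l * dv (\<mu> l) (f c l))"
        unfolding sum_leaves_node[OF Node.prems(1)] by (intro sum.cong refl) (simp add: lamc)
      also have "\<dots> \<le> (\<Sum>c\<in>set cs. ?D c * (\<Sum>l\<in>leaves c. w l) + d')"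
        using f by (intro sum_mono) auto
      also have "\<dots> \<le> (\<Sum>c\<in>set cs. ?D ?s * (\<Sum>l\<in>leaves c. w l) + d')"
      proof (intro sum_mono add_right_mono mult_right_mono Wnn)
        fix c assume c: "c \<in> set cs"
        show "?D c \<le> ?D ?s" using True c by simp
      qed
      also have "\<dots> = ?D ?s * (\<Sum>c\<in>set cs. \<Sum>l\<in>leaves c. w l) + real n * d'"
        by (simp only: sum.distrib sum_distrib_left sum_constant n_def)
      also have "\<dots> = ?D ?s * (\<Sum>l\<in>leaves ?s. w l) + \<delta>"
      proof -
        have e: "(\<Sum>c\<in>set cs. \<Sum>l\<in>leaves c. w l) = (\<Sum>l\<in>leaves ?s. w l)"
          by (rule sum_leaves_node[OF Node.prems(1), symmetric])
        have nd: "real n * d' = \<delta>" using n by (simp add: d'_def)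
        show ?thesis by (simp only: e nd)
      qed
      finally show ?thesis .
    qed
    ultimately show ?thesis by blast
  next
    case False
    have ext: "\<exists>lam. (\<forall>l\<in>leaves ?s. lam l \<in> X) \<and> goal \<theta> win lam ?s \<and>
         (\<Sum>l\<in>leaves ?s. w l * dv (\<mu> l) (lam l)) \<le> ?D c * (\<Sum>l\<in>leaves c. w l) + \<delta>"
      if c: "c \<in> set cs" for c
    proof -
      obtain lam0 where l0: "\<forall>l\<in>leaves c. lam0 l \<in> X" "goal \<theta> win lam0 c"
        "(\<Sum>l\<in>leaves c. w l * dv (\<mu> l) (lam0 l)) \<le> ?D c * (\<Sum>l\<in>leaves c. w l) + \<delta>"
        using Node.IH[OF c sub[OF c] Node.prems(2)] by blast
      define lam where "lam l = (if l \<in> leaves c then lam0 l else \<mu> l)" for l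
      have "goal \<theta> win lam c" using l0(2) goal_cong[of c lam lam0] by (auto simp: lam_def)
      then have "goal \<theta> win lam ?s" using goal_Q[OF False ne] c by blast
      moreover have "\<forall>l\<in>leaves ?s. lam l \<in> X" using l0(1) lX by (auto simp: lam_def)
      moreover have "(\<Sum>l\<in>leaves ?s. w l * dv (\<mu> l) (lam l)) = (\<Sum>l\<in>leaves c. w l * dv (\<mu> l) (lam l))"
        using c by (intro sum.mono_neutral_right leaves_finite) (auto simp: lam_def dv_self)
      moreover have "(\<Sum>l\<in>leaves c. w l * dv (\<mu> l) (lam l)) = (\<Sum>l\<in>leaves c. w l * dv (\<mu> l) (lam0 l))"
        by (simp add: lam_def)
      ultimately show ?thesis using l0(3) by (intro exI[of _ lam]) auto
    qed
    show ?thesis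
    proof (cases "\<forall>c\<in>set cs. 0 < ?D c")
      case True
      define H where "H = (\<Sum>c'\<in>set cs. 1 / ?D c')"
      have Hp: "0 < H" unfolding H_def using True ne by (intro sum_pos) auto
      have Ds: "?D ?s = 1 / H" using True False by (simp add: H_def inverse_eq_divide)
      define Ws where "Ws = (\<Sum>l\<in>leaves ?s. w l)"
      have Ws: "Ws = (\<Sum>c\<in>set cs. \<Sum>l\<in>leaves c. w l)" unfolding Ws_def by (rule sum_leaves_node[OF Node.prems(1)])
      have "\<exists>c\<in>set cs. ?D c * (\<Sum>l\<in>leaves c. w l) \<le> Ws / H"
      proof (rule ccontr)
        assume na: "\<not> ?thesis"
        have lt: "(Ws / H) * (1 / ?D c) < (\<Sum>l\<in>leaves c. w l)" if c: "c \<in> set cs" for c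
        proof -
          have "Ws / H < ?D c * (\<Sum>l\<in>leaves c. w l)" using na c by auto
          then have "(Ws / H) / ?D c < (\<Sum>l\<in>leaves c. w l)" using True c
            by (subst divide_less_eq) (auto simp: mult.commute)
          then show ?thesis by simp
        qed
        have "(\<Sum>c\<in>set cs. (Ws / H) * (1 / ?D c)) < (\<Sum>c\<in>set cs. \<Sum>l\<in>leaves c. w l)"
          using ne lt by (intro sum_strict_mono) auto
        also have "\<dots> = Ws" using Ws by simp
        finally have "(Ws / H) * H < Ws" by (simp add: sum_distrib_left H_def)
        then show False using Hp by simp
      qed
      then obtain c where c: "c \<in> set cs" "?D c * (\<Sum>l\<in>leaves c. w l) \<le> Ws / H" by blast
      have "Ws / H = ?D ?s * Ws" using Ds by simp
      obtain lam where lam: "\<forall>l\<in>leaves ?s. lam l \<in> X" "goal \<theta> win lam ?s"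
         "(\<Sum>l\<in>leaves ?s. w l * dv (\<mu> l) (lam l)) \<le> ?D c * (\<Sum>l\<in>leaves c. w l) + \<delta>"
        using ext[OF c(1)] by blast
      have "(\<Sum>l\<in>leaves ?s. w l * dv (\<mu> l) (lam l)) \<le> ?D ?s * Ws + \<delta>"
        using lam(3) c(2) \<open>Ws / H = ?D ?s * Ws\<close> by linarith
      then show ?thesis using lam(1,2) unfolding Ws_def by blast
    next
      case False2: False
      then obtain c where c: "c \<in> set cs" "\<not> 0 < ?D c" by blast
      have "?D c = 0" using Dnn[OF c(1)] c(2) by simp
      moreover have "?D ?s = 0" using False False2 by (simp only: dval.simps if_False)
      ultimately show ?thesis using ext[OF c(1)] by simp
    qed
  qed
qed


lemma T_sub: "T \<in> subtrees T" by (rule subtrees_refl)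

lemma Alt_iff: "lam \<in> Alt X \<theta> T \<mu> \<longleftrightarrow> (\<forall>l\<in>leaves T. lam l \<in> X) \<and> goal \<theta> (wins \<theta> \<mu> T) lam T"
  unfolding Alt_def using wins_goal by blast

lemma cost_nn:
  assumes "\<forall>l\<in>leaves T. \<mu> l \<in> X" "w \<in> leaf_simplex (leaves T)" "lam \<in> Alt X \<theta> T \<mu>"
  shows "0 \<le> (\<Sum>l\<in>leaves T. w l * dv (\<mu> l) (lam l))"
  using assms by (intro sum_nonneg mult_nonneg_nonneg dv_nn simplex_nn[of w "leaves T"]) (auto simp: Alt_iff)

lemma Alt_ne: assumes "\<forall>l\<in>leaves T. \<mu> l \<in> X" shows "Alt X \<theta> T \<mu> \<noteq> {}"
proof -
  obtain lam where "(\<forall>l\<in>leaves T. lam l \<in> X) \<and> goal \<theta> (wins \<theta> \<mu> T) lam T"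
    using upper[OF assms, of "\<lambda>_. 0", OF _ T_sub, of 1] by auto
  then show ?thesis using Alt_iff by blast
qed

lemma obj_upper:
  assumes X: "\<forall>l\<in>leaves T. \<mu> l \<in> X" and w: "w \<in> leaf_simplex (leaves T)"
  shows "objective dv X \<theta> T \<mu> w \<le> D \<mu> T"
proof (rule field_le_epsilon)
  fix e :: real assume e: "0 < e"
  have wnn: "\<forall>l\<in>leaves T. 0 \<le> w l" and w1: "sum w (leaves T) = 1" using w by (auto simp: leaf_simplex_def)
  obtain lam where lam: "\<forall>l\<in>leaves T. lam l \<in> X" "goal \<theta> (wins \<theta> \<mu> T) lam T"
    "(\<Sum>l\<in>leaves T. w l * dv (\<mu> l) (lam l)) \<le> D \<mu> T * (\<Sum>l\<in>leaves T. w l) + e"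
    using upper[OF X wnn T_sub e] by blast
  have la: "lam \<in> Alt X \<theta> T \<mu>" using lam Alt_iff by blast
  have "objective dv X \<theta> T \<mu> w \<le> (\<Sum>l\<in>leaves T. w l * dv (\<mu> l) (lam l))"
    unfolding objective_def
    by (rule cINF_lower[OF _ la]) (auto intro!: bdd_belowI[where m=0] cost_nn[OF X w])
  then show "objective dv X \<theta> T \<mu> w \<le> D \<mu> T + e" using lam(3) w1 by simp
qed

lemma obj_lower:
  assumes X: "\<forall>l\<in>leaves T. \<mu> l \<in> X" and vw: "valid_weights dv \<theta> \<mu> T w"
  shows "D \<mu> T \<le> objective dv X \<theta> T \<mu> (w T)"
  unfolding objective_def
proof (rule cINF_greatest[OF Alt_ne[OF X]])
  fix lam assume "lam \<in> Alt X \<theta> T \<mu>"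
  then show "D \<mu> T \<le> (\<Sum>l\<in>leaves T. w T l * dv (\<mu> l) (lam l))"
    using lower[OF vw X T_sub] by (auto simp: Alt_iff)
qed

lemma obj_nonneg:
  assumes X: "\<forall>l\<in>leaves T. \<mu> l \<in> X" and w: "w \<in> leaf_simplex (leaves T)"
  shows "0 \<le> objective dv X \<theta> T \<mu> w"
  unfolding objective_def using cost_nn[OF X w] by (intro cINF_greatest[OF Alt_ne[OF X]]) auto

end


fun Wt :: "(real \<Rightarrow> real \<Rightarrow> real) \<Rightarrow> real \<Rightarrow> bool \<Rightarrow> ('l \<Rightarrow> real) \<Rightarrow> ('l gtree \<Rightarrow> 'l gtree) \<Rightarrow> 'l gtree \<Rightarrow> 'l \<Rightarrow> real"
where
  "Wt dv \<theta> win \<nu> ch (Leaf l) = (\<lambda>m. if m = l then 1 else 0)"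
| "Wt dv \<theta> win \<nu> ch (Node k cs) =
    (if (k = MAXnode) = win \<and> 0 < dval dv \<theta> win \<nu> (Node k cs) then
       (\<lambda>m. \<Sum>c\<in>set cs. if c = ch (Node k cs) then (if m \<in> leaves c then Wt dv \<theta> win \<nu> ch c m else 0) else 0)
     else if (k = MAXnode) \<noteq> win \<and> (\<forall>c\<in>set cs. 0 < dval dv \<theta> win \<nu> c) then
       (\<lambda>m. \<Sum>c\<in>set cs. if m \<in> leaves c then
             (Wt dv \<theta> win \<nu> ch c m / dval dv \<theta> win \<nu> c) / (\<Sum>c'\<in>set cs. 1 / dval dv \<theta> win \<nu> c') else 0)
     else (\<lambda>m. if m \<in> leaves (Node k cs) then 1 / real (card (leaves (Node k cs))) else 0))"


context TR
begin

definition argch :: "bool \<Rightarrow> ('l \<Rightarrow> real) \<Rightarrow> ('l gtree \<Rightarrow> 'l gtree) \<Rightarrow> bool" where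
  "argch win \<nu> ch \<longleftrightarrow> (\<forall>k cs. Node k cs \<in> subtrees T \<longrightarrow> (k = MAXnode) = win \<longrightarrow>
      0 < dval dv \<theta> win \<nu> (Node k cs) \<longrightarrow>
      ch (Node k cs) \<in> set cs \<and> dval dv \<theta> win \<nu> (ch (Node k cs)) = dval dv \<theta> win \<nu> (Node k cs))"

lemma argmax_ex:
  assumes "Node k cs \<in> subtrees T" "(k = MAXnode) = win"
  shows "\<exists>c\<in>set cs. dval dv \<theta> win \<nu> c = dval dv \<theta> win \<nu> (Node k cs)"
proof -
  have ne: "cs \<noteq> []" using sub_wf[OF assms(1)] by simp
  have "Max (dval dv \<theta> win \<nu> ` set cs) \<in> dval dv \<theta> win \<nu> ` set cs"
    using ne by (intro Max_in) auto
  then show ?thesis using assms(2) by auto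
qed

definition ch0 :: "bool \<Rightarrow> ('l \<Rightarrow> real) \<Rightarrow> 'l gtree \<Rightarrow> 'l gtree" where
  "ch0 win \<nu> s = (case s of Leaf l \<Rightarrow> s
     | Node k cs \<Rightarrow> (SOME c. c \<in> set cs \<and> dval dv \<theta> win \<nu> c = dval dv \<theta> win \<nu> s))"

lemma argch_ch0: "argch win \<nu> (ch0 win \<nu>)"
  unfolding argch_def
proof (intro allI impI)
  fix k cs assume a: "Node k cs \<in> subtrees T" "(k = MAXnode) = win"
  have "\<exists>c. c \<in> set cs \<and> dval dv \<theta> win \<nu> c = dval dv \<theta> win \<nu> (Node k cs)"
    using argmax_ex[OF a] by blast
  from someI_ex[OF this]
  show "ch0 win \<nu> (Node k cs) \<in> set cs \<and> dval dv \<theta> win \<nu> (ch0 win \<nu> (Node k cs)) = dval dv \<theta> win \<nu> (Node k cs)"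
    unfolding ch0_def by simp
qed

lemma argch_upd:
  assumes "argch win \<nu> ch" "c \<in> set cs" "dval dv \<theta> win \<nu> c = dval dv \<theta> win \<nu> (Node k cs)"
  shows "argch win \<nu> (ch(Node k cs := c))"
  using assms unfolding argch_def by (auto simp del: dval.simps)

lemma Wt_valid:
  assumes X: "\<forall>l\<in>leaves T. \<nu> l \<in> X" and ac: "argch (wins \<theta> \<nu> T) \<nu> ch"
  shows "valid_weights dv \<theta> \<nu> T (Wt dv \<theta> (wins \<theta> \<nu> T) \<nu> ch)"
  unfolding valid_weights_def
proof (intro ballI)
  fix s assume s: "s \<in> subtrees T"
  let ?win = "wins \<theta> \<nu> T"
  let ?W = "Wt dv \<theta> ?win \<nu> ch"
  show "case s of Leaf l \<Rightarrow> ?W s = (\<lambda>m. if m = l then 1 else 0)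
      | Node k cs \<Rightarrow>
          (((k = MAXnode) = ?win \<and> 0 < dval dv \<theta> ?win \<nu> s) \<longrightarrow>
             (\<exists>c\<in>set cs. dval dv \<theta> ?win \<nu> c = dval dv \<theta> ?win \<nu> s \<and>
                 ?W s = (\<lambda>m. if m \<in> leaves c then ?W c m else 0)))
        \<and> (((k = MAXnode) \<noteq> ?win \<and> (\<forall>c\<in>set cs. 0 < dval dv \<theta> ?win \<nu> c)) \<longrightarrow>
             ?W s = (\<lambda>m. \<Sum>c\<in>set cs. if m \<in> leaves c then
                  (?W c m / dval dv \<theta> ?win \<nu> c) /
                  (\<Sum>c'\<in>set cs. 1 / dval dv \<theta> ?win \<nu> c') else 0))
        \<and> (dval dv \<theta> ?win \<nu> s = 0 \<longrightarrow>
             (\<forall>m. 0 \<le> ?W s m) \<and> (\<forall>m. m \<notin> leaves s \<longrightarrow> ?W s m = 0) \<and>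
             (\<Sum>m\<in>leaves s. ?W s m) = 1)"
  proof (cases s)
    case (Leaf l)
    then show ?thesis by simp
  next
    case (Node k cs)
    let ?D = "dval dv \<theta> ?win \<nu>"
    have c1: "\<exists>c\<in>set cs. ?D c = ?D s \<and> ?W s = (\<lambda>m. if m \<in> leaves c then ?W c m else 0)"
      if P: "(k = MAXnode) = ?win" "0 < ?D s"
    proof -
      have ch: "ch s \<in> set cs" "?D (ch s) = ?D s" using ac P s Node unfolding argch_def by blast+
      have "?W s = (\<lambda>m. \<Sum>c\<in>set cs. if c = ch s then (if m \<in> leaves c then ?W c m else 0) else 0)"
        using P Node by (simp del: dval.simps)
      also have "\<dots> = (\<lambda>m. if m \<in> leaves (ch s) then ?W (ch s) m else 0)"
        using ch(1) by (simp add: sum.delta')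
      finally show ?thesis using ch by blast
    qed
    have c2: "?W s = (\<lambda>m. \<Sum>c\<in>set cs. if m \<in> leaves c then (?W c m / ?D c) / (\<Sum>c'\<in>set cs. 1 / ?D c') else 0)"
      if Q: "(k = MAXnode) \<noteq> ?win" "\<forall>c\<in>set cs. 0 < ?D c"
      using Q Node by (simp del: dval.simps)
    have c3: "(\<forall>m. 0 \<le> ?W s m) \<and> (\<forall>m. m \<notin> leaves s \<longrightarrow> ?W s m = 0) \<and> (\<Sum>m\<in>leaves s. ?W s m) = 1"
      if Z: "?D s = 0"
    proof -
      have "wf_tree s" using sub_wf[OF s] .
      then have ne: "cs \<noteq> []" using Node by simp
      have nQ: "\<not> ((k = MAXnode) \<noteq> ?win \<and> (\<forall>c\<in>set cs. 0 < ?D c))"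
      proof
        assume Q: "(k = MAXnode) \<noteq> ?win \<and> (\<forall>c\<in>set cs. 0 < ?D c)"
        then have "0 < (\<Sum>c\<in>set cs. 1 / ?D c)" using ne by (intro sum_pos) auto
        then have "0 < ?D s" using Q Node by simp
        then show False using Z by simp
      qed
      have nP: "\<not> ((k = MAXnode) = ?win \<and> 0 < ?D (Node k cs))" using Z Node by simp
      have "?W (Node k cs) = (\<lambda>m. if m \<in> leaves (Node k cs) then 1 / real (card (leaves (Node k cs))) else 0)"
        by (simp only: Wt.simps nP nQ if_False)
      then have Ws: "?W s = (\<lambda>m. if m \<in> leaves s then 1 / real (card (leaves s)) else 0)"
        unfolding Node .
      have cp: "0 < card (leaves s)" using leaves_ne sub_wf[OF s] leaves_finite card_gt_0_iff by blast
      show ?thesis unfolding Ws using cp by simp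
    qed
    show ?thesis using c1 c2 c3 Node by (simp del: dval.simps Wt.simps)
  qed
qed

lemma Wt_P:
  assumes "argch win \<nu> ch" "Node k cs \<in> subtrees T" "(k = MAXnode) = win" "0 < dval dv \<theta> win \<nu> (Node k cs)"
  shows "Wt dv \<theta> win \<nu> ch (Node k cs) m = (if m \<in> leaves (ch (Node k cs)) then Wt dv \<theta> win \<nu> ch (ch (Node k cs)) m else 0)"
proof -
  have ch: "ch (Node k cs) \<in> set cs" using assms unfolding argch_def by blast
  show ?thesis using assms(3,4) ch by (simp add: sum.delta' del: dval.simps)
qed

end


lemma tendsto_Max_img:
  fixes f :: "'b \<Rightarrow> 'a \<Rightarrow> real"
  assumes "finite S" "S \<noteq> {}" "\<forall>i\<in>S. ((\<lambda>n. f n i) \<longlongrightarrow> g i) F"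
  shows "((\<lambda>n. Max (f n ` S)) \<longlongrightarrow> Max (g ` S)) F"
  using assms
proof (induction S rule: finite_ne_induct)
  case (singleton x) then show ?case by simp
next
  case (insert x S)
  have "((\<lambda>n. max (f n x) (Max (f n ` S))) \<longlongrightarrow> max (g x) (Max (g ` S))) F"
    using insert by (intro tendsto_max) auto
  then show ?case using insert by simp
qed

lemma tendsto_Min_img:
  fixes f :: "'b \<Rightarrow> 'a \<Rightarrow> real"
  assumes "finite S" "S \<noteq> {}" "\<forall>i\<in>S. ((\<lambda>n. f n i) \<longlongrightarrow> g i) F"
  shows "((\<lambda>n. Min (f n ` S)) \<longlongrightarrow> Min (g ` S)) F"
  using assms
proof (induction S rule: finite_ne_induct)
  case (singleton x) then show ?case by simp
next
  case (insert x S)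
  have "((\<lambda>n. min (f n x) (Min (f n ` S))) \<longlongrightarrow> min (g x) (Min (g ` S))) F"
    using insert by (intro tendsto_min) auto
  then show ?case using insert by simp
qed

locale SEQ = TR +
  fixes \<mu> :: "'a \<Rightarrow> real" and \<mu>s :: "nat \<Rightarrow> 'a \<Rightarrow> real"
  assumes muX: "\<forall>l\<in>leaves T. \<mu> l \<in> X"
    and musX: "\<forall>n. \<forall>l\<in>leaves T. \<mu>s n l \<in> X"
    and lim: "\<forall>l\<in>leaves T. ((\<lambda>n. \<mu>s n l) \<longlongrightarrow> \<mu> l) sequentially"
    and vne: "val \<mu> T \<noteq> \<theta>"
begin

lemma val_tendsto: "s \<in> subtrees T \<Longrightarrow> ((\<lambda>n. val (\<mu>s n) s) \<longlongrightarrow> val \<mu> s) sequentially"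
proof (induction s)
  case (Leaf l)
  then show ?case using lim subtree_leaves[OF Leaf.prems] by auto
next
  case (Node k cs)
  have ne: "cs \<noteq> []" using sub_wf[OF Node.prems] by simp
  have IH: "\<forall>c\<in>set cs. ((\<lambda>n. val (\<mu>s n) c) \<longlongrightarrow> val \<mu> c) sequentially"
    using Node child_subtree by blast
  show ?case
  proof (cases k)
    case MAXnode
    then show ?thesis using tendsto_Max_img[OF _ _ IH] ne by simp
  next
    case MINnode
    then show ?thesis using tendsto_Min_img[OF _ _ IH] ne by simp
  qed
qed

lemma ev_wins: "eventually (\<lambda>n. wins \<theta> (\<mu>s n) T = wins \<theta> \<mu> T) sequentially"
proof (cases "val \<mu> T < \<theta>")
  case True
  then have "eventually (\<lambda>n. val (\<mu>s n) T < \<theta>) sequentially"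
    using order_tendstoD(2)[OF val_tendsto[OF T_sub]] by blast
  then show ?thesis by eventually_elim (use True in \<open>auto simp: wins_def\<close>)
next
  case False
  then have "\<theta> < val \<mu> T" using vne by simp
  then have "eventually (\<lambda>n. \<theta> < val (\<mu>s n) T) sequentially"
    using order_tendstoD(1)[OF val_tendsto[OF T_sub]] by blast
  then show ?thesis by eventually_elim (use \<open>\<theta> < val \<mu> T\<close> in \<open>auto simp: wins_def\<close>)
qed

lemma D_tendsto: "s \<in> subtrees T \<Longrightarrow> ((\<lambda>n. dval dv \<theta> win (\<mu>s n) s) \<longlongrightarrow> dval dv \<theta> win \<mu> s) sequentially"
proof (induction s)
  case (Leaf l)
  have l: "l \<in> leaves T" using subtree_leaves[OF Leaf.prems] by simp
  have x0: "\<mu> l \<in> X" and xs0: "\<forall>n. \<mu>s n l \<in> X" using muX musX l by auto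
  then have xs: "\<forall>\<^sub>F n in sequentially. \<mu>s n l \<in> X" by simp
  have lm: "((\<lambda>n. \<mu>s n l) \<longlongrightarrow> \<mu> l) sequentially" using lim l by auto
  have dvt: "((\<lambda>n. dv (\<mu>s n l) \<theta>) \<longlongrightarrow> dv (\<mu> l) \<theta>) sequentially" by (rule dv_tendsto[OF x0 xs0 lm])
  show ?case
  proof (cases "\<mu> l = \<theta>")
    case True
    have "((\<lambda>n. dval dv \<theta> win (\<mu>s n) (Leaf l)) \<longlongrightarrow> 0) sequentially"
    proof (rule tendsto_sandwich[of "\<lambda>_. 0" _ _ "\<lambda>n. dv (\<mu>s n l) \<theta>"])
      show "\<forall>\<^sub>F n in sequentially. 0 \<le> dval dv \<theta> win (\<mu>s n) (Leaf l)"
        using xs by eventually_elim (auto intro: dv_nn thX)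
      show "\<forall>\<^sub>F n in sequentially. dval dv \<theta> win (\<mu>s n) (Leaf l) \<le> dv (\<mu>s n l) \<theta>"
        using xs by eventually_elim (auto intro: dv_nn thX)
      show "((\<lambda>n. dv (\<mu>s n l) \<theta>) \<longlongrightarrow> 0) sequentially" using dvt True dv_self by simp
    qed simp
    moreover have r: "dval dv \<theta> win \<mu> (Leaf l) = 0" using True dv_self by simp
    ultimately show ?thesis by simp
  next
    case False
    have ev: "\<forall>\<^sub>F n in sequentially. (\<theta> \<le> \<mu>s n l \<longleftrightarrow> \<theta> \<le> \<mu> l) \<and> (\<mu>s n l < \<theta> \<longleftrightarrow> \<mu> l < \<theta>)"
    proof (cases "\<mu> l < \<theta>")
      case True
      show ?thesis using order_tendstoD(2)[OF lm True] by eventually_elim (use True in auto)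
    next
      case False2: False
      then have "\<theta> < \<mu> l" using False by simp
      have "\<forall>\<^sub>F n in sequentially. \<theta> < \<mu>s n l" using order_tendstoD(1)[OF lm \<open>\<theta> < \<mu> l\<close>] .
      then show ?thesis by eventually_elim (use \<open>\<theta> < \<mu> l\<close> in auto)
    qed
    have "\<forall>\<^sub>F n in sequentially. dval dv \<theta> win (\<mu>s n) (Leaf l) =
        (if (win \<and> \<theta> \<le> \<mu> l) \<or> (\<not> win \<and> \<mu> l < \<theta>) then dv (\<mu>s n l) \<theta> else 0)"
      using ev by eventually_elim auto
    moreover have "((\<lambda>n. if (win \<and> \<theta> \<le> \<mu> l) \<or> (\<not> win \<and> \<mu> l < \<theta>) then dv (\<mu>s n l) \<theta> else 0)
        \<longlongrightarrow> dval dv \<theta> win \<mu> (Leaf l)) sequentially"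
      using dvt by auto
    ultimately show ?thesis by (simp add: tendsto_cong)
  qed
next
  case (Node k cs)
  let ?s = "Node k cs"
  have ne: "cs \<noteq> []" using sub_wf[OF Node.prems] by simp
  have sub: "c \<in> set cs \<Longrightarrow> c \<in> subtrees T" for c using child_subtree Node.prems by blast
  have IH: "\<forall>c\<in>set cs. ((\<lambda>n. dval dv \<theta> win (\<mu>s n) c) \<longlongrightarrow> dval dv \<theta> win \<mu> c) sequentially"
    using Node sub by blast
  have nnm: "c \<in> set cs \<Longrightarrow> 0 \<le> dval dv \<theta> win \<mu> c" for c
    using muX subtree_leaves[OF sub] by (intro dval_nn sub_wf sub) auto
  have nns: "c \<in> set cs \<Longrightarrow> 0 \<le> dval dv \<theta> win (\<mu>s n) c" for c n
    using musX subtree_leaves[OF sub] by (intro dval_nn sub_wf sub) auto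
  show ?case
  proof (cases "(k = MAXnode) = win")
    case True
    then show ?thesis using tendsto_Max_img[OF _ _ IH] ne by simp
  next
    case False
    show ?thesis
    proof (cases "\<forall>c\<in>set cs. 0 < dval dv \<theta> win \<mu> c")
      case True
      have evp: "\<forall>\<^sub>F n in sequentially. \<forall>c\<in>set cs. 0 < dval dv \<theta> win (\<mu>s n) c"
        using IH True by (intro eventually_ball_finite) (auto intro: order_tendstoD(1))
      have Hp: "0 < (\<Sum>c\<in>set cs. 1 / dval dv \<theta> win \<mu> c)" using True ne by (intro sum_pos) auto
      have "((\<lambda>n. inverse (\<Sum>c\<in>set cs. 1 / dval dv \<theta> win (\<mu>s n) c)) \<longlongrightarrow>
             inverse (\<Sum>c\<in>set cs. 1 / dval dv \<theta> win \<mu> c)) sequentially"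
        using Hp IH True by (intro tendsto_inverse tendsto_sum tendsto_divide tendsto_const) auto
      moreover have "\<forall>\<^sub>F n in sequentially. dval dv \<theta> win (\<mu>s n) ?s = inverse (\<Sum>c\<in>set cs. 1 / dval dv \<theta> win (\<mu>s n) c)"
        using evp by eventually_elim (use False in simp)
      ultimately show ?thesis using False True by (simp add: tendsto_cong)
    next
      case False2: False
      then obtain c0 where c0: "c0 \<in> set cs" "dval dv \<theta> win \<mu> c0 = 0" using nnm by force
      have lim0: "dval dv \<theta> win \<mu> ?s = 0" using False False2 by (simp only: dval.simps if_False)
      have "((\<lambda>n. dval dv \<theta> win (\<mu>s n) ?s) \<longlongrightarrow> 0) sequentially"
      proof (rule tendsto_sandwich[of "\<lambda>_. 0" _ _ "\<lambda>n. dval dv \<theta> win (\<mu>s n) c0"])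
        show "\<forall>\<^sub>F n in sequentially. 0 \<le> dval dv \<theta> win (\<mu>s n) ?s"
          using musX subtree_leaves[OF Node.prems] by (intro always_eventually allI dval_nn sub_wf[OF Node.prems]) auto
        show "\<forall>\<^sub>F n in sequentially. dval dv \<theta> win (\<mu>s n) ?s \<le> dval dv \<theta> win (\<mu>s n) c0"
        proof (intro always_eventually allI)
          fix n
          show "dval dv \<theta> win (\<mu>s n) ?s \<le> dval dv \<theta> win (\<mu>s n) c0"
          proof (cases "\<forall>c\<in>set cs. 0 < dval dv \<theta> win (\<mu>s n) c")
            case True
            have p: "0 < dval dv \<theta> win (\<mu>s n) c0" using True c0 by auto
            have "1 / dval dv \<theta> win (\<mu>s n) c0 \<le> (\<Sum>c\<in>set cs. 1 / dval dv \<theta> win (\<mu>s n) c)"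
              using True c0 by (intro member_le_sum) (auto simp: less_imp_le)
            then have "inverse (\<Sum>c\<in>set cs. 1 / dval dv \<theta> win (\<mu>s n) c) \<le> inverse (1 / dval dv \<theta> win (\<mu>s n) c0)"
              using p by (intro le_imp_inverse_le) auto
            then show ?thesis using True False by simp
          next
            case False3: False
            then show ?thesis using False nns[OF c0(1)] by auto
          qed
        qed
        show "((\<lambda>n. dval dv \<theta> win (\<mu>s n) c0) \<longlongrightarrow> 0) sequentially" using IH c0 by auto
      qed simp
      then show ?thesis using lim0 by simp
    qed
  qed
qed


abbreviation wn0 where "wn0 \<equiv> wins \<theta> \<mu> T"
abbreviation Dm where "Dm \<equiv> dval dv \<theta> wn0 \<mu>"
abbreviation Dn where "Dn n \<equiv> dval dv \<theta> wn0 (\<mu>s n)"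

definition goodA :: "'a gtree \<Rightarrow> bool" where
  "goodA s \<longleftrightarrow> (\<forall>w ws. valid_weights dv \<theta> \<mu> T w \<longrightarrow> (\<forall>n. valid_weights dv \<theta> (\<mu>s n) T (ws n)) \<longrightarrow>
      (\<forall>l\<in>leaves s. ((\<lambda>n. ws n s l) \<longlongrightarrow> w s l) sequentially))"

definition goodB :: "'a gtree \<Rightarrow> bool" where
  "goodB s \<longleftrightarrow> (\<exists>ch1 ch2. argch wn0 \<mu> ch1 \<and> argch wn0 \<mu> ch2 \<and>
      (\<exists>l\<in>leaves s. Wt dv \<theta> wn0 \<mu> ch1 s l \<noteq> Wt dv \<theta> wn0 \<mu> ch2 s l))"

lemma Wt_simplex: "argch wn0 \<mu> ch \<Longrightarrow> s \<in> subtrees T \<Longrightarrow> Wt dv \<theta> wn0 \<mu> ch s \<in> leaf_simplex (leaves s)"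
  using vw_simplex[OF Wt_valid[OF muX] muX] by blast

lemma claim: "s \<in> subtrees T \<Longrightarrow> 0 < Dm s \<Longrightarrow> goodA s \<or> goodB s"
proof (induction s)
  case (Leaf l)
  have "goodA (Leaf l)" unfolding goodA_def
  proof (intro allI impI ballI)
    fix w ws m
    assume vw: "valid_weights dv \<theta> \<mu> T w" and vws: "\<forall>n. valid_weights dv \<theta> (\<mu>s n) T (ws n)"
    have "ws n (Leaf l) m = w (Leaf l) m" for n
      using vw_leaf[OF vw Leaf.prems(1)] vw_leaf[OF vws[rule_format, of n] Leaf.prems(1)] by simp
    then show "((\<lambda>n. ws n (Leaf l) m) \<longlongrightarrow> w (Leaf l) m) sequentially" by simp
  qed
  then show ?case by blast
next
  case (Node k cs)
  let ?s = "Node k cs"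
  have sub: "c \<in> set cs \<Longrightarrow> c \<in> subtrees T" for c using child_subtree Node.prems by blast
  have ne: "cs \<noteq> []" using sub_wf[OF Node.prems(1)] by simp
  have Dlim: "c \<in> subtrees T \<Longrightarrow> ((\<lambda>n. Dn n c) \<longlongrightarrow> Dm c) sequentially" for c
    by (rule D_tendsto)
  show ?case
  proof (cases "(k = MAXnode) = wn0")
    case P: True
    show ?thesis
    proof (cases "\<exists>c1\<in>set cs. \<exists>c2\<in>set cs. c1 \<noteq> c2 \<and> Dm c1 = Dm ?s \<and> Dm c2 = Dm ?s")
      case True
      then obtain c1 c2 where c: "c1 \<in> set cs" "c2 \<in> set cs" "c1 \<noteq> c2" "Dm c1 = Dm ?s" "Dm c2 = Dm ?s"
        by blast
      define ch1 where "ch1 = (ch0 wn0 \<mu>)(?s := c1)"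
      define ch2 where "ch2 = (ch0 wn0 \<mu>)(?s := c2)"
      have a1: "argch wn0 \<mu> ch1" unfolding ch1_def using argch_upd[OF argch_ch0 c(1) c(4)] .
      have a2: "argch wn0 \<mu> ch2" unfolding ch2_def using argch_upd[OF argch_ch0 c(2) c(5)] .
      have "Wt dv \<theta> wn0 \<mu> ch1 c1 \<in> leaf_simplex (leaves c1)" using Wt_simplex[OF a1 sub[OF c(1)]] .
      then have "sum (Wt dv \<theta> wn0 \<mu> ch1 c1) (leaves c1) = 1" by (simp add: leaf_simplex_def)
      then obtain l where l: "l \<in> leaves c1" "Wt dv \<theta> wn0 \<mu> ch1 c1 l \<noteq> 0"
        by (metis (mono_tags, lifting) sum.neutral zero_neq_one)
      have "Wt dv \<theta> wn0 \<mu> ch1 ?s l = Wt dv \<theta> wn0 \<mu> ch1 c1 l"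
        using Wt_P[OF a1 Node.prems(1) P Node.prems(2)] l(1) by (simp add: ch1_def)
      moreover have "Wt dv \<theta> wn0 \<mu> ch2 ?s l = 0"
        using Wt_P[OF a2 Node.prems(1) P Node.prems(2)] l(1) children_disj_sub[OF gt Node.prems(1) c(1,2,3)]
        by (auto simp: ch2_def)
      moreover have "l \<in> leaves ?s" using l c(1) by auto
      ultimately have "goodB ?s" unfolding goodB_def using a1 a2 by (metis zero_neq_one l(2))
      then show ?thesis by blast
    next
      case False
      obtain cs0 where cs0: "cs0 \<in> set cs" "Dm cs0 = Dm ?s" using argmax_ex[OF Node.prems(1) P] by blast
      have uniq: "c \<in> set cs \<Longrightarrow> Dm c = Dm ?s \<Longrightarrow> c = cs0" for c using False cs0 by blast
      have pos0: "0 < Dm cs0" using cs0 Node.prems(2) by simp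
      have IH0: "goodA cs0 \<or> goodB cs0" using Node.IH[OF cs0(1) sub[OF cs0(1)] pos0] .
      show ?thesis
      proof (cases "goodB cs0")
        case True
        then obtain ch1 ch2 l where b: "argch wn0 \<mu> ch1" "argch wn0 \<mu> ch2" "l \<in> leaves cs0"
          "Wt dv \<theta> wn0 \<mu> ch1 cs0 l \<noteq> Wt dv \<theta> wn0 \<mu> ch2 cs0 l" unfolding goodB_def by blast
        have "ch1 ?s = cs0" "ch2 ?s = cs0"
          using b(1,2) Node.prems P uniq unfolding argch_def by blast+
        then have "Wt dv \<theta> wn0 \<mu> ch1 ?s l \<noteq> Wt dv \<theta> wn0 \<mu> ch2 ?s l"
          using Wt_P[OF b(1) Node.prems(1) P Node.prems(2)] Wt_P[OF b(2) Node.prems(1) P Node.prems(2)] b(3,4)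
          by simp
        moreover have "l \<in> leaves ?s" using b(3) cs0(1) by auto
        ultimately have "goodB ?s" unfolding goodB_def using b(1,2) by blast
        then show ?thesis by blast
      next
        case False2: False
        then have A0: "goodA cs0" using IH0 by blast
        have "goodA ?s" unfolding goodA_def
        proof (intro allI impI ballI)
          fix w ws l
          assume vw: "valid_weights dv \<theta> \<mu> T w" and vws: "\<forall>n. valid_weights dv \<theta> (\<mu>s n) T (ws n)"
            and l: "l \<in> leaves ?s"
          obtain c' where c': "c' \<in> set cs" "Dm c' = Dm ?s" "w ?s = (\<lambda>m. if m \<in> leaves c' then w c' m else 0)"
            using vw_P[OF vw Node.prems(1) P Node.prems(2)] by blast
          have c'0: "c' = cs0" using uniq c' by blast
          have wsl: "w ?s l = (if l \<in> leaves cs0 then w cs0 l else 0)" using c' c'0 by simp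
          have gap: "\<forall>c\<in>set cs - {cs0}. Dm c < Dm cs0"
          proof
            fix c assume c: "c \<in> set cs - {cs0}"
            have "Dm c \<le> Dm ?s" using P c by simp
            moreover have "Dm c \<noteq> Dm ?s" using uniq c by blast
            ultimately show "Dm c < Dm cs0" using cs0 by simp
          qed
          have E3: "\<forall>\<^sub>F n in sequentially. \<forall>c\<in>set cs - {cs0}. Dn n c < Dn n cs0"
          proof (rule eventually_ball_finite)
            show "finite (set cs - {cs0})" by simp
            show "\<forall>c\<in>set cs - {cs0}. \<forall>\<^sub>F n in sequentially. Dn n c < Dn n cs0"
            proof
              fix c assume c: "c \<in> set cs - {cs0}"
              have "((\<lambda>n. Dn n cs0 - Dn n c) \<longlongrightarrow> Dm cs0 - Dm c) sequentially"
                using c cs0 by (intro tendsto_diff Dlim sub) auto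
              moreover have "0 < Dm cs0 - Dm c" using gap c by simp
              ultimately have "\<forall>\<^sub>F n in sequentially. 0 < Dn n cs0 - Dn n c" by (rule order_tendstoD(1))
              then show "\<forall>\<^sub>F n in sequentially. Dn n c < Dn n cs0" by eventually_elim simp
            qed
          qed
          have E2: "\<forall>\<^sub>F n in sequentially. 0 < Dn n ?s"
            using order_tendstoD(1)[OF Dlim[OF Node.prems(1)] Node.prems(2)] .
          have "\<forall>\<^sub>F n in sequentially. ws n ?s l = (if l \<in> leaves cs0 then ws n cs0 l else 0)"
            using ev_wins E2 E3
          proof eventually_elim
            case (elim n)
            have wn: "wins \<theta> (\<mu>s n) T = wn0" using elim(1) .
            obtain c'' where c'': "c'' \<in> set cs" "Dn n c'' = Dn n ?s"
                "ws n ?s = (\<lambda>m. if m \<in> leaves c'' then ws n c'' m else 0)"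
              using vw_P[OF vws[rule_format, of n] Node.prems(1)] P elim(2) unfolding wn by blast
            have "Dn n cs0 \<le> Dn n ?s" using P cs0(1) by simp
            then have "c'' = cs0"
            proof -
              assume le: "Dn n cs0 \<le> Dn n ?s"
              show "c'' = cs0"
              proof (rule ccontr)
                assume "c'' \<noteq> cs0"
                then have "Dn n c'' < Dn n cs0" using elim(3) c''(1) by blast
                then show False using c''(2) le by linarith
              qed
            qed
            then show ?case using c'' by simp
          qed
          moreover have "((\<lambda>n. if l \<in> leaves cs0 then ws n cs0 l else 0) \<longlongrightarrow> w ?s l) sequentially"
          proof (cases "l \<in> leaves cs0")
            case True
            then show ?thesis using A0 vw vws wsl unfolding goodA_def by simp
          next
            case False
            then show ?thesis using wsl by simp
          qed
          ultimately show "((\<lambda>n. ws n ?s l) \<longlongrightarrow> w ?s l) sequentially" by (simp add: tendsto_cong)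
        qed
        then show ?thesis by blast
      qed
    qed
  next
    case Q: False
    have allp: "\<forall>c\<in>set cs. 0 < Dm c"
    proof (rule ccontr)
      assume "\<not> (\<forall>c\<in>set cs. 0 < Dm c)"
      then have "Dm ?s = 0" using Q by (simp only: dval.simps if_False)
      then show False using Node.prems(2) by simp
    qed
    define H where "H = (\<Sum>c'\<in>set cs. 1 / Dm c')"
    have Hp: "0 < H" unfolding H_def using allp ne by (intro sum_pos) auto
    show ?thesis
    proof (cases "\<exists>c\<in>set cs. goodB c")
      case True
      then obtain c ch1 ch2 l where b: "c \<in> set cs" "argch wn0 \<mu> ch1" "argch wn0 \<mu> ch2" "l \<in> leaves c"
          "Wt dv \<theta> wn0 \<mu> ch1 c l \<noteq> Wt dv \<theta> wn0 \<mu> ch2 c l" unfolding goodB_def by blast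
      have "Wt dv \<theta> wn0 \<mu> ch1 ?s l = (Wt dv \<theta> wn0 \<mu> ch1 c l / Dm c) / H"
        using vw_Q_at[OF Wt_valid[OF muX b(2)] Node.prems(1) Q allp b(1) b(4)] by (simp add: H_def)
      moreover have "Wt dv \<theta> wn0 \<mu> ch2 ?s l = (Wt dv \<theta> wn0 \<mu> ch2 c l / Dm c) / H"
        using vw_Q_at[OF Wt_valid[OF muX b(3)] Node.prems(1) Q allp b(1) b(4)] by (simp add: H_def)
      ultimately have "Wt dv \<theta> wn0 \<mu> ch1 ?s l \<noteq> Wt dv \<theta> wn0 \<mu> ch2 ?s l"
        using b(5) Hp allp b(1) by auto
      moreover have "l \<in> leaves ?s" using b(1,4) by auto
      ultimately have "goodB ?s" unfolding goodB_def using b(2,3) by blast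
      then show ?thesis by blast
    next
      case False
      then have A: "c \<in> set cs \<Longrightarrow> goodA c" for c using Node.IH sub allp by blast
      have "goodA ?s" unfolding goodA_def
      proof (intro allI impI ballI)
        fix w ws l
        assume vw: "valid_weights dv \<theta> \<mu> T w" and vws: "\<forall>n. valid_weights dv \<theta> (\<mu>s n) T (ws n)"
          and l: "l \<in> leaves ?s"
        then obtain c where c: "c \<in> set cs" "l \<in> leaves c" by auto
        have wl: "w ?s l = (w c l / Dm c) / H"
          using vw_Q_at[OF vw Node.prems(1) Q allp c] by (simp add: H_def)
        have E: "\<forall>\<^sub>F n in sequentially. \<forall>c\<in>set cs. 0 < Dn n c"
          using allp by (intro eventually_ball_finite) (auto intro: order_tendstoD(1)[OF Dlim[OF sub]])
        have "\<forall>\<^sub>F n in sequentially. ws n ?s l = (ws n c l / Dn n c) / (\<Sum>c'\<in>set cs. 1 / Dn n c')"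
          using ev_wins E
        proof eventually_elim
          case (elim n)
          have wn: "wins \<theta> (\<mu>s n) T = wn0" using elim(1) .
          show ?case using vw_Q_at[OF vws[rule_format, of n] Node.prems(1) _ _ c] Q elim(2) unfolding wn by simp
        qed
        moreover have "((\<lambda>n. (ws n c l / Dn n c) / (\<Sum>c'\<in>set cs. 1 / Dn n c')) \<longlongrightarrow> w ?s l) sequentially"
          unfolding wl H_def
          using A[OF c(1)] vw vws c allp Hp[unfolded H_def]
          by (intro tendsto_divide tendsto_sum tendsto_const Dlim sub) (auto simp: goodA_def)
        ultimately show "((\<lambda>n. ws n ?s l) \<longlongrightarrow> w ?s l) sequentially" by (simp add: tendsto_cong)
      qed
      then show ?thesis by blast
    qed
  qed
qed


lemma root_goodA:
  assumes uniq: "\<exists>!w. w \<in> leaf_simplex (leaves T) \<and>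
           (\<forall>w'\<in>leaf_simplex (leaves T). objective dv X \<theta> T \<mu> w' \<le> objective dv X \<theta> T \<mu> w)"
    and pos: "0 < Dm T"
  shows "goodA T"
proof -
  have "goodA T \<or> goodB T" using claim[OF T_sub pos] .
  moreover have "\<not> goodB T"
  proof
    assume "goodB T"
    then obtain ch1 ch2 l where b: "argch wn0 \<mu> ch1" "argch wn0 \<mu> ch2" "l \<in> leaves T"
      "Wt dv \<theta> wn0 \<mu> ch1 T l \<noteq> Wt dv \<theta> wn0 \<mu> ch2 T l" unfolding goodB_def by blast
    have good: "Wt dv \<theta> wn0 \<mu> ch T \<in> leaf_simplex (leaves T) \<and>
           (\<forall>w'\<in>leaf_simplex (leaves T). objective dv X \<theta> T \<mu> w' \<le> objective dv X \<theta> T \<mu> (Wt dv \<theta> wn0 \<mu> ch T))"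
      if a: "argch wn0 \<mu> ch" for ch
    proof (intro conjI ballI)
      show "Wt dv \<theta> wn0 \<mu> ch T \<in> leaf_simplex (leaves T)" using Wt_simplex[OF a T_sub] .
      fix w' assume w': "w' \<in> leaf_simplex (leaves T)"
      have "objective dv X \<theta> T \<mu> w' \<le> Dm T" using obj_upper[OF muX w'] by simp
      also have "\<dots> \<le> objective dv X \<theta> T \<mu> (Wt dv \<theta> wn0 \<mu> ch T)"
        using obj_lower[OF muX Wt_valid[OF muX a]] by simp
      finally show "objective dv X \<theta> T \<mu> w' \<le> objective dv X \<theta> T \<mu> (Wt dv \<theta> wn0 \<mu> ch T)" .
    qed
    have "Wt dv \<theta> wn0 \<mu> ch1 T = Wt dv \<theta> wn0 \<mu> ch2 T"
      using uniq good[OF b(1)] good[OF b(2)] by blast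
    then show False using b(4) by simp
  qed
  ultimately show ?thesis by blast
qed

end


theorem lemma6:
  fixes N :: "real measure" and \<Theta> :: "real set" and \<theta> :: real
    and T :: "'l gtree" and \<mu> :: "'l \<Rightarrow> real"
  assumes "expfam N \<Theta>"
    and "\<theta> \<in> mean_set N \<Theta>"
    and "game_tree T"
    and "\<forall>l\<in>leaves T. \<mu> l \<in> mean_set N \<Theta>"
    and "val \<mu> T \<noteq> \<theta>"
    and "\<exists>!w. w \<in> leaf_simplex (leaves T) \<and>
           (\<forall>w'\<in>leaf_simplex (leaves T).
              objective (KL N \<Theta>) (mean_set N \<Theta>) \<theta> T \<mu> w'
                \<le> objective (KL N \<Theta>) (mean_set N \<Theta>) \<theta> T \<mu> w)"
  shows "\<forall>\<epsilon>>0. \<exists>\<xi>>0. \<forall>\<mu>'.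
           (\<forall>l\<in>leaves T. \<mu>' l \<in> mean_set N \<Theta> \<and> \<mu> l - \<xi> \<le> \<mu>' l \<and> \<mu>' l \<le> \<mu> l + \<xi>) \<longrightarrow>
           (\<forall>w w'. valid_weights (KL N \<Theta>) \<theta> \<mu> T w \<and> valid_weights (KL N \<Theta>) \<theta> \<mu>' T w' \<longrightarrow>
              Max ((\<lambda>l. \<bar>w' T l - w T l\<bar>) ` leaves T) < \<epsilon>)"
proof -
  interpret E: EF N \<Theta> using assms(1) by unfold_locales
  interpret R: TR "KL N \<Theta>" "mean_set N \<Theta>" \<theta> T
  proof (unfold_locales)
    show "game_tree T" by fact
    show "\<theta> \<in> mean_set N \<Theta>" by fact
    show "\<And>x y. x \<in> mean_set N \<Theta> \<Longrightarrow> y \<in> mean_set N \<Theta> \<Longrightarrow> 0 \<le> KL N \<Theta> x y" by (rule E.KL_nonneg)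
    show "\<And>x. KL N \<Theta> x x = 0" by (rule E.KL_self)
    show "\<And>x y z. x \<in> mean_set N \<Theta> \<Longrightarrow> y \<in> mean_set N \<Theta> \<Longrightarrow> z \<in> mean_set N \<Theta> \<Longrightarrow>
        x \<le> y \<Longrightarrow> y \<le> z \<Longrightarrow> KL N \<Theta> x y \<le> KL N \<Theta> x z" by (rule E.KL_mono_up)
    show "\<And>x y z. x \<in> mean_set N \<Theta> \<Longrightarrow> y \<in> mean_set N \<Theta> \<Longrightarrow> z \<in> mean_set N \<Theta> \<Longrightarrow>
        z \<le> y \<Longrightarrow> y \<le> x \<Longrightarrow> KL N \<Theta> x y \<le> KL N \<Theta> x z" by (rule E.KL_mono_down)
    show "\<And>x d. x \<in> mean_set N \<Theta> \<Longrightarrow> 0 < d \<Longrightarrow> \<exists>y\<in>mean_set N \<Theta>. y < \<theta> \<and> KL N \<Theta> x y \<le> KL N \<Theta> x \<theta> + d"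
      using E.below_approx assms(2) by blast
    show "\<And>x0 xs. x0 \<in> mean_set N \<Theta> \<Longrightarrow> \<forall>n. (xs :: nat \<Rightarrow> real) n \<in> mean_set N \<Theta> \<Longrightarrow> xs \<longlonglongrightarrow> x0 \<Longrightarrow>
        (\<lambda>n. KL N \<Theta> (xs n) \<theta>) \<longlonglongrightarrow> KL N \<Theta> x0 \<theta>"
    proof -
      fix x0 and xs :: "nat \<Rightarrow> real"
      assume a: "x0 \<in> mean_set N \<Theta>" "\<forall>n. xs n \<in> mean_set N \<Theta>" "xs \<longlonglongrightarrow> x0"
      show "(\<lambda>n. KL N \<Theta> (xs n) \<theta>) \<longlonglongrightarrow> KL N \<Theta> x0 \<theta>"
        by (rule E.KL_tendsto[OF a(1) _ a(3) assms(2)]) (use a(2) in simp)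
    qed
  qed
  let ?D0 = "dval (KL N \<Theta>) \<theta> (wins \<theta> \<mu> T) \<mu> T"
  have D0nn: "0 \<le> ?D0" using R.dval_nn[OF R.sub_wf[OF R.T_sub] assms(4)] .
  show ?thesis
  proof (cases "?D0 = 0")
    case True
    have allmax: "w \<in> leaf_simplex (leaves T) \<and>
           (\<forall>w'\<in>leaf_simplex (leaves T).
              objective (KL N \<Theta>) (mean_set N \<Theta>) \<theta> T \<mu> w'
                \<le> objective (KL N \<Theta>) (mean_set N \<Theta>) \<theta> T \<mu> w)"
      if w: "w \<in> leaf_simplex (leaves T)" for w
      using w R.obj_upper[OF assms(4)] R.obj_nonneg[OF assms(4) w] True by (metis order_trans)
    define ind where "ind a = (\<lambda>m. if m = a then 1 else (0::real))" for a :: 'l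
    have ind: "a \<in> leaves T \<Longrightarrow> ind a \<in> leaf_simplex (leaves T)" for a
      unfolding leaf_simplex_def ind_def using leaves_finite[of T] by (auto simp: sum.delta)
    have single: "a \<in> leaves T \<Longrightarrow> b \<in> leaves T \<Longrightarrow> a = b" for a b
    proof -
      assume a: "a \<in> leaves T" and b: "b \<in> leaves T"
      have "ind a = ind b" using assms(6) allmax[OF ind[OF a]] allmax[OF ind[OF b]] by blast
      then have "ind a a = ind b a" by simp
      then show "a = b" unfolding ind_def by (cases "a = b") auto
    qed
    obtain a where a: "a \<in> leaves T"
      using leaves_ne[OF R.sub_wf[OF R.T_sub]] by blast
    have LT: "leaves T = {a}" using single a by blast
    show ?thesis
    proof (intro allI impI exI[of _ 1] conjI)
      fix \<epsilon> :: real and \<mu>' w w'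
      assume e: "0 < \<epsilon>"
        and cl: "\<forall>l\<in>leaves T. \<mu>' l \<in> mean_set N \<Theta> \<and> \<mu> l - 1 \<le> \<mu>' l \<and> \<mu>' l \<le> \<mu> l + 1"
        and vw: "valid_weights (KL N \<Theta>) \<theta> \<mu> T w \<and> valid_weights (KL N \<Theta>) \<theta> \<mu>' T w'"
      have s1: "w T \<in> leaf_simplex {a}" using R.vw_simplex[OF conjunct1[OF vw] assms(4) R.T_sub] LT by simp
      have s2: "w' T \<in> leaf_simplex {a}" using R.vw_simplex[OF conjunct2[OF vw] _ R.T_sub] cl LT by simp
      have "w T a = 1" "w' T a = 1" using s1 s2 by (auto simp: leaf_simplex_def)
      then show "Max ((\<lambda>l. \<bar>w' T l - w T l\<bar>) ` leaves T) < \<epsilon>" using LT e by simp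
    qed simp
  next
    case False
    then have pos: "0 < ?D0" using D0nn by simp
    show ?thesis
    proof (rule ccontr)
      assume "\<not> ?thesis"
      then obtain \<epsilon> :: real where e: "0 < \<epsilon>" and H: "\<not> (\<exists>\<xi>>0. \<forall>\<mu>'.
           (\<forall>l\<in>leaves T. \<mu>' l \<in> mean_set N \<Theta> \<and> \<mu> l - \<xi> \<le> \<mu>' l \<and> \<mu>' l \<le> \<mu> l + \<xi>) \<longrightarrow>
           (\<forall>w w'. valid_weights (KL N \<Theta>) \<theta> \<mu> T w \<and> valid_weights (KL N \<Theta>) \<theta> \<mu>' T w' \<longrightarrow>
              Max ((\<lambda>l. \<bar>w' T l - w T l\<bar>) ` leaves T) < \<epsilon>))"
        by blast
      define P where "P n \<mu>' \<longleftrightarrow> (\<forall>l\<in>leaves T. \<mu>' l \<in> mean_set N \<Theta> \<and> \<mu> l - 1 / real (Suc n) \<le> \<mu>' l \<and> \<mu>' l \<le> \<mu> l + 1 / real (Suc n)) \<and>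
           \<not> (\<forall>w w'. valid_weights (KL N \<Theta>) \<theta> \<mu> T w \<and> valid_weights (KL N \<Theta>) \<theta> \<mu>' T w' \<longrightarrow>
              Max ((\<lambda>l. \<bar>w' T l - w T l\<bar>) ` leaves T) < \<epsilon>)" for n \<mu>'
      have "\<forall>n. \<exists>\<mu>'. P n \<mu>'"
      proof
        fix n :: nat
        have "0 < 1 / real (Suc n)" by simp
        then have "\<not> (\<forall>\<mu>'.
           (\<forall>l\<in>leaves T. \<mu>' l \<in> mean_set N \<Theta> \<and> \<mu> l - 1 / real (Suc n) \<le> \<mu>' l \<and> \<mu>' l \<le> \<mu> l + 1 / real (Suc n)) \<longrightarrow>
           (\<forall>w w'. valid_weights (KL N \<Theta>) \<theta> \<mu> T w \<and> valid_weights (KL N \<Theta>) \<theta> \<mu>' T w' \<longrightarrow>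
              Max ((\<lambda>l. \<bar>w' T l - w T l\<bar>) ` leaves T) < \<epsilon>))"
          using H by blast
        then show "\<exists>\<mu>'. P n \<mu>'" unfolding P_def by blast
      qed
      then obtain \<mu>s where Pm: "\<And>n. P n (\<mu>s n)" using choice[of P] by blast
      have exf: "\<forall>n. \<exists>p. valid_weights (KL N \<Theta>) \<theta> \<mu> T (fst p) \<and> valid_weights (KL N \<Theta>) \<theta> (\<mu>s n) T (snd p) \<and>
              \<not> Max ((\<lambda>l. \<bar>snd p T l - fst p T l\<bar>) ` leaves T) < \<epsilon>"
      proof
        fix n
        obtain w w' where "valid_weights (KL N \<Theta>) \<theta> \<mu> T w" "valid_weights (KL N \<Theta>) \<theta> (\<mu>s n) T w'"
          "\<not> Max ((\<lambda>l. \<bar>w' T l - w T l\<bar>) ` leaves T) < \<epsilon>"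
          using Pm[of n] unfolding P_def by blast
        then show "\<exists>p. valid_weights (KL N \<Theta>) \<theta> \<mu> T (fst p) \<and> valid_weights (KL N \<Theta>) \<theta> (\<mu>s n) T (snd p) \<and>
              \<not> Max ((\<lambda>l. \<bar>snd p T l - fst p T l\<bar>) ` leaves T) < \<epsilon>"
          by (intro exI[of _ "(w, w')"]) simp
      qed
      then obtain f where f: "\<And>n. valid_weights (KL N \<Theta>) \<theta> \<mu> T (fst (f n)) \<and> valid_weights (KL N \<Theta>) \<theta> (\<mu>s n) T (snd (f n)) \<and>
              \<not> Max ((\<lambda>l. \<bar>snd (f n) T l - fst (f n) T l\<bar>) ` leaves T) < \<epsilon>"
        using choice[OF exf] by blast
      define ws where "ws n = fst (f n)" for n
      define ws' where "ws' n = snd (f n)" for n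
      have ws': "\<forall>n. valid_weights (KL N \<Theta>) \<theta> \<mu> T (ws n) \<and> valid_weights (KL N \<Theta>) \<theta> (\<mu>s n) T (ws' n) \<and>
              \<not> Max ((\<lambda>l. \<bar>ws' n T l - ws n T l\<bar>) ` leaves T) < \<epsilon>"
        using f by (simp add: ws_def ws'_def)
      have ms: "\<forall>n. \<forall>l\<in>leaves T. \<mu>s n l \<in> mean_set N \<Theta> \<and> \<mu> l - 1 / real (Suc n) \<le> \<mu>s n l \<and> \<mu>s n l \<le> \<mu> l + 1 / real (Suc n)"
        using Pm unfolding P_def by blast
      have msX: "\<forall>n. \<forall>l\<in>leaves T. \<mu>s n l \<in> mean_set N \<Theta>" using ms by blast
      have mlim: "\<forall>l\<in>leaves T. (\<lambda>n. \<mu>s n l) \<longlonglongrightarrow> \<mu> l"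
      proof
        fix l assume l: "l \<in> leaves T"
        have "(\<lambda>n. \<mu>s n l - \<mu> l) \<longlonglongrightarrow> 0"
        proof (rule Lim_null_comparison)
          show "\<forall>\<^sub>F n in sequentially. norm (\<mu>s n l - \<mu> l) \<le> inverse (real (Suc n))"
          proof (intro always_eventually allI)
            fix n
            have b: "\<mu> l - 1 / real (Suc n) \<le> \<mu>s n l" "\<mu>s n l \<le> \<mu> l + 1 / real (Suc n)"
              using ms l by blast+
            show "norm (\<mu>s n l - \<mu> l) \<le> inverse (real (Suc n))"
              unfolding real_norm_def abs_le_iff inverse_eq_divide using b by linarith
          qed
          show "(\<lambda>n. inverse (real (Suc n))) \<longlonglongrightarrow> 0" by (rule LIMSEQ_inverse_real_of_nat)
        qed
        then show "(\<lambda>n. \<mu>s n l) \<longlonglongrightarrow> \<mu> l" by (simp add: LIM_zero_iff)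
      qed
      interpret S1: SEQ "KL N \<Theta>" "mean_set N \<Theta>" \<theta> T \<mu> \<mu>s
        by unfold_locales (use assms(4,5) msX mlim in auto)
      interpret S2: SEQ "KL N \<Theta>" "mean_set N \<Theta>" \<theta> T \<mu> "\<lambda>n. \<mu>"
        by unfold_locales (use assms(4,5) in auto)
      have A1: "S1.goodA T" using S1.root_goodA[OF assms(6) pos] .
      have A2: "S2.goodA T" using S2.root_goodA[OF assms(6) pos] .
      have c1: "\<forall>l\<in>leaves T. (\<lambda>n. ws' n T l) \<longlonglongrightarrow> ws 0 T l"
        using A1 ws' unfolding S1.goodA_def by blast
      have c2: "\<forall>l\<in>leaves T. (\<lambda>n. ws n T l) \<longlonglongrightarrow> ws 0 T l"
        using A2 ws' unfolding S2.goodA_def by blast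
      have "\<forall>\<^sub>F n in sequentially. \<forall>l\<in>leaves T. \<bar>ws' n T l - ws n T l\<bar> < \<epsilon>"
      proof (rule eventually_ball_finite[OF leaves_finite], rule ballI)
        fix l assume l: "l \<in> leaves T"
        have "(\<lambda>n. \<bar>ws' n T l - ws n T l\<bar>) \<longlonglongrightarrow> \<bar>ws 0 T l - ws 0 T l\<bar>"
          using c1 c2 l by (intro tendsto_intros) auto
        then have "(\<lambda>n. \<bar>ws' n T l - ws n T l\<bar>) \<longlonglongrightarrow> 0" by simp
        then show "\<forall>\<^sub>F n in sequentially. \<bar>ws' n T l - ws n T l\<bar> < \<epsilon>"
          using e by (rule order_tendstoD(2))
      qed
      then obtain n where n: "\<forall>l\<in>leaves T. \<bar>ws' n T l - ws n T l\<bar> < \<epsilon>"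
        by (auto simp: eventually_sequentially)
      have "leaves T \<noteq> {}" using leaves_ne[OF R.sub_wf[OF R.T_sub]] .
      then have "Max ((\<lambda>l. \<bar>ws' n T l - ws n T l\<bar>) ` leaves T) < \<epsilon>"
        using n by (simp add: leaves_finite)
      then show False using ws' by blast
    qed
  qed
qed


end
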